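(* Let $X$ and $Y$ be represented spaces, let $R\subseteq\mathbb{N}^\mathbb{N}$ be endowed with a Borel measure $\mu_R$, let $I$ be an interval and let $f:\subseteq X\rightrightarrows Y$ be a multi-valued function. Then $f\le_W \mathsf{P}_I\mathsf{C}_R$ if and only if $f$ is Las Vegas computable over $R$ with measure in $I$.
   Context: A represented space is a pair $(X,\delta_X)$ where $\delta_X:\subseteq\mathbb{N}^\mathbb{N}\to X$ is a partial surjection; subsets of $\mathbb{N}^\mathbb{N}$ are represented by the identity, and pairs by the standard pairing $\langle p,q\rangle(2k)=p(k)$, $\langle p,q\rangle(2k+1)=q(k)$. Problems are partial multi-valued functions $f:\subseteq X\rightrightarrows Y$. A realizer of $f$ is a partial $F:\subseteq\mathbb{N}^\mathbb{N}\to\mathbb{N}^\mathbb{N}$ with $\delta_Y F(p)\in f(\delta_X(p))$ for all $p\in\mathrm{dom}(f\circ\delta_X)$. $f$ is Weihrauch reducible to $g$, written $f\le_W g$, if there are computable partial $H,K:\subseteq\mathbb{N}^\mathbb{N}\to\mathbb{N}^\mathbb{N}$ such that $p\mapsto H\langle p,GK(p)\rangle$ realizes $f$ for every realizer $G$ of $g$. Sierpiński space $\mathbb{S}=\{0,1\}$ is represented by $\delta_{\mathbb S}(p)=0$ if $p$ is the constant zero sequence and $\delta_{\mathbb S}(p)=1$ otherwise. For a represented space $X$, $\mathcal{A}_-(X)$ denotes the set of closed subsets of $X$ represented by negative information: a name of $A$ is a name of the characteristic function $X\to\mathbb S$ of $X\setminus A$. An interval is an interval of reals with open or closed endpoints,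 where $\infty$ is allowed as (open or closed) right endpoint, but $[\infty,\infty]$ is not an interval. If $X$ carries a Borel measure $\mu$ and $I$ is an interval, probabilistic choice $\mathsf{P}_I\mathsf{C}_X:\subseteq\mathcal{A}_-(X)\rightrightarrows X$, $A\mapsto A$, is defined on all nonempty closed $A\subseteq X$ with $\mu(A)\in I$ (any point of $A$ is an admissible output). Las Vegas computability: for $R\subseteq\mathbb{N}^\mathbb{N}$ with Borel measure $\mu_R$ and interval $I$, $f:\subseteq X\rightrightarrows Y$ is Las Vegas computable over $R$ with measure in $I$ if there exist computable $F_1,F_2:\subseteq\mathbb{N}^\mathbb{N}\to\mathbb{N}^\mathbb{N}$ such that $\langle p,r\rangle\in\mathrm{dom}(F_2)$ for all $p\in\mathrm{dom}(f\delta_X)$, $r\in R$, and for each $p\in\mathrm{dom}(f\delta_X)$: (1) $S_p:=\{r\in R:\delta_{\mathbb S}F_2\langle p,r\rangle=0\}$ is non-empty and $\mu_R(S_p)\in I$; (2) $\delta_YF_1\langle p,r\rangle\in f\delta_X(p)$ for all $r\in S_p$. *)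

theory Defs
  imports "HOL-Analysis.Analysis" "HOL-Library.Nat_Bijection"
begin

type_synonym baire = "nat \<Rightarrow> nat"

datatype recf = Zr | Sc | Pj nat | Orc | Cn recf "recf list" | Pr recf recf | Mn recf

inductive oev :: "baire \<Rightarrow> recf \<Rightarrow> nat list \<Rightarrow> nat \<Rightarrow> bool" for a :: baire where
  oev_Zr: "oev a Zr xs 0"
| oev_Sc: "oev a Sc (x # xs) (Suc x)"
| oev_Pj: "i < length xs \<Longrightarrow> oev a (Pj i) xs (xs ! i)"
| oev_Orc: "oev a Orc (x # xs) (a x)"
| oev_Cn: "length ys = length gs \<Longrightarrow> \<forall>i<length gs. oev a (gs ! i) xs (ys ! i)
           \<Longrightarrow> oev a f ys z \<Longrightarrow> oev a (Cn f gs) xs z"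
| oev_Pr0: "oev a f xs y \<Longrightarrow> oev a (Pr f g) (0 # xs) y"
| oev_PrS: "oev a (Pr f g) (n # xs) y \<Longrightarrow> oev a g (n # y # xs) z \<Longrightarrow> oev a (Pr f g) (Suc n # xs) z"
| oev_Mn: "oev a f (n # xs) 0 \<Longrightarrow> \<forall>m<n. \<exists>y. y \<noteq> 0 \<and> oev a f (m # xs) y \<Longrightarrow> oev a (Mn f) xs n"

definition computable :: "(baire \<Rightarrow> baire option) \<Rightarrow> bool" where
  "computable F \<longleftrightarrow> (\<exists>c. \<forall>p q. F p = Some q \<longrightarrow> (\<forall>n. oev p c [n] (q n)))"

definition pair :: "baire \<Rightarrow> baire \<Rightarrow> baire" where
  "pair p q = (\<lambda>n. if even n then p (n div 2) else q (n div 2))"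

definition represented :: "'x set \<Rightarrow> (baire \<Rightarrow> 'x option) \<Rightarrow> bool" where
  "represented X \<delta> \<longleftrightarrow> (\<forall>p x. \<delta> p = Some x \<longrightarrow> x \<in> X) \<and> (\<forall>x\<in>X. \<exists>p. \<delta> p = Some x)"

text \<open>Multi-valued functions \<open>f :\<subseteq> X \<rightrightarrows> Y\<close> are set-valued; \<open>dom f = {x. f x \<noteq> {}}\<close>.\<close>
definition realizes :: "(baire \<Rightarrow> 'x option) \<Rightarrow> (baire \<Rightarrow> 'y option) \<Rightarrow> ('x \<Rightarrow> 'y set)
    \<Rightarrow> (baire \<Rightarrow> baire option) \<Rightarrow> bool" where
  "realizes \<delta>X \<delta>Y f F \<longleftrightarrow>
     (\<forall>p x. \<delta>X p = Some x \<and> f x \<noteq> {} \<longrightarrow> (\<exists>q y. F p = Some q \<and> \<delta>Y q = Some y \<and> y \<in> f x))"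

definition weihrauch_le ::
  "(baire \<Rightarrow> 'x option) \<Rightarrow> (baire \<Rightarrow> 'y option) \<Rightarrow> ('x \<Rightarrow> 'y set) \<Rightarrow>
   (baire \<Rightarrow> 'z option) \<Rightarrow> (baire \<Rightarrow> 'w option) \<Rightarrow> ('z \<Rightarrow> 'w set) \<Rightarrow> bool" where
  "weihrauch_le \<delta>X \<delta>Y f \<delta>Z \<delta>W g \<longleftrightarrow>
     (\<exists>H K. computable H \<and> computable K \<and>
        (\<forall>G. realizes \<delta>Z \<delta>W g G \<longrightarrow>
              realizes \<delta>X \<delta>Y f
                (\<lambda>p. case K p of None \<Rightarrow> None
                      | Some k \<Rightarrow> (case G k of None \<Rightarrow> None | Some q \<Rightarrow> H (pair p q)))))"

definition delta_S :: "baire \<Rightarrow> bool" where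
  "delta_S p \<longleftrightarrow> p \<noteq> (\<lambda>_. 0)"   (* True = 1, False = 0 *)

definition delta_sub :: "baire set \<Rightarrow> baire \<Rightarrow> baire option" where
  "delta_sub R p = (if p \<in> R then Some p else None)"

text \<open>Standard enumeration \<open>\<eta>\<close> of continuous partial functions on Baire space
  (Weihrauch): \<open>\<eta>_p(q)(n) = p\<langle>n, q|k\<rangle> - 1\<close> for the least k with \<open>p\<langle>n,q|k\<rangle> > 0\<close>.\<close>
definition seqcode :: "baire \<Rightarrow> nat \<Rightarrow> nat" where
  "seqcode q k = list_encode (map q [0..<k])"

definition eta :: "baire \<Rightarrow> baire \<Rightarrow> baire option" where
  "eta p q = (if \<forall>n. \<exists>k. 0 < p (prod_encode (n, seqcode q k))
      then Some (\<lambda>n. p (prod_encode (n, seqcode q (LEAST k. 0 < p (prod_encode (n, seqcode q k))))) - 1)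
      else None)"

text \<open>Function space representation of \<open>R \<rightarrow> \<S>\<close>: p names h iff \<open>\<eta>_p\<close> realizes h.
  A name of \<open>A \<in> \<A>_-(R)\<close> is a name of the characteristic function of \<open>R - A\<close>.\<close>
definition delta_closed :: "baire set \<Rightarrow> baire \<Rightarrow> baire set option" where
  "delta_closed R p =
     (if \<forall>r\<in>R. eta p r \<noteq> None
      then Some {r \<in> R. \<not> delta_S (the (eta p r))}
      else None)"

definition is_interval_ext :: "ereal set \<Rightarrow> bool" where
  "is_interval_ext I \<longleftrightarrow> (\<exists>a::real. \<exists>b::ereal. b \<noteq> -\<infinity> \<and>
      I \<in> {{ereal a..b}, {ereal a<..b}, {ereal a..<b}, {ereal a<..<b}})"

definition PC :: "baire measure \<Rightarrow> baire set \<Rightarrow> ereal set \<Rightarrow> baire set \<Rightarrow> baire set" where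
  "PC \<mu> R I A = (if A \<noteq> {} \<and> A \<subseteq> R \<and> closedin (top_of_set R) A \<and> enn2ereal (emeasure \<mu> A) \<in> I
                 then A else {})"

definition las_vegas :: "(baire \<Rightarrow> 'x option) \<Rightarrow> (baire \<Rightarrow> 'y option) \<Rightarrow> ('x \<Rightarrow> 'y set)
    \<Rightarrow> baire set \<Rightarrow> baire measure \<Rightarrow> ereal set \<Rightarrow> bool" where
  "las_vegas \<delta>X \<delta>Y f R \<mu> I \<longleftrightarrow>
     (\<exists>F1 F2. computable F1 \<and> computable F2 \<and>
        (\<forall>p x. \<delta>X p = Some x \<and> f x \<noteq> {} \<longrightarrow>
           (\<forall>r\<in>R. F2 (pair p r) \<noteq> None) \<and>
           (let S = {r \<in> R. \<not> delta_S (the (F2 (pair p r)))} in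
              S \<noteq> {} \<and> enn2ereal (emeasure \<mu> S) \<in> I \<and>
              (\<forall>r\<in>S. \<exists>q y. F1 (pair p r) = Some q \<and> \<delta>Y q = Some y \<and> y \<in> f x))))"

end

theory Submission
  imports Defs
begin
inductive_cases oevZrE: "oev a Zr xs y"
inductive_cases oevScE: "oev a Sc xs y"
inductive_cases oevPjE: "oev a (Pj i) xs y"
inductive_cases oevOrcE: "oev a Orc xs y"
inductive_cases oevCnE: "oev a (Cn f gs) xs y"
inductive_cases oevPr0E: "oev a (Pr f g) (0#xs) y"
inductive_cases oevPrSE: "oev a (Pr f g) (Suc n#xs) y"
inductive_cases oevMnE: "oev a (Mn f) xs y"

lemma oev_det: "oev a c xs y \<Longrightarrow> oev a c xs y' \<Longrightarrow> y = y'"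
proof (induction arbitrary: y' rule: oev.induct)
  case (oev_Zr xs) then show ?case by (auto elim: oevZrE)
next
  case (oev_Sc x xs) then show ?case by (auto elim: oevScE)
next
  case (oev_Pj i xs) then show ?case by (auto elim: oevPjE)
next
  case (oev_Orc x xs) then show ?case by (auto elim: oevOrcE)
next
  case (oev_Cn ys gs xs f z)
  from oev_Cn.prems obtain ys' where l: "length ys' = length gs"
    and h: "\<forall>i<length gs. oev a (gs ! i) xs (ys' ! i)" and fz: "oev a f ys' y'"
    by (auto elim: oevCnE)
  have "ys = ys'"
  proof (rule nth_equalityI)
    show "length ys = length ys'" using oev_Cn(1) l by simp
    fix i assume "i < length ys"
    then have i: "i < length gs" using oev_Cn(1) by simp
    then have "\<And>y'. oev a (gs ! i) xs y' \<Longrightarrow> ys ! i = y'" using oev_Cn.IH(1) by blast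
    then show "ys ! i = ys' ! i" using h i by blast
  qed
  then show ?case using oev_Cn.IH(2) fz by auto
next
  case (oev_Pr0 f xs y g)
  from oev_Pr0.prems have "oev a f xs y'" by (auto elim: oevPr0E)
  then show ?case using oev_Pr0.IH by blast
next
  case (oev_PrS f g n xs y z)
  from oev_PrS.prems obtain y2 where 1: "oev a (Pr f g) (n#xs) y2" and 2: "oev a g (n#y2#xs) y'"
    by (auto elim: oevPrSE)
  from 1 oev_PrS.IH(1) have "y = y2" by blast
  then show ?case using 2 oev_PrS.IH(2) by blast
next
  case (oev_Mn f n xs)
  from oev_Mn.prems obtain n' where y': "y' = n'" and z: "oev a f (n'#xs) 0"
    and b: "\<forall>m<n'. \<exists>y. y \<noteq> 0 \<and> oev a f (m # xs) y" by (auto elim: oevMnE)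
  have "\<not> n < n'"
  proof
    assume "n < n'" then obtain y where y: "y \<noteq> 0" "oev a f (n#xs) y" using b by auto
    have "\<And>y'. oev a f (n # xs) y' \<Longrightarrow> 0 = y'" by (rule oev_Mn.IH(1))
    then show False using y by metis
  qed
  moreover have "\<not> n' < n"
  proof
    assume "n' < n" then obtain y where "y \<noteq> 0" "\<And>y'. oev a f (n'#xs) y' \<Longrightarrow> y = y'"
      using oev_Mn.IH(2) by blast
    then show False using z by metis
  qed
  ultimately show ?case using y' by simp
qed

definition rc :: "nat \<Rightarrow> recf \<Rightarrow> (baire \<Rightarrow> nat list \<Rightarrow> nat) \<Rightarrow> bool" where
  "rc n c F \<longleftrightarrow> (\<forall>a xs. length xs = n \<longrightarrow> oev a c xs (F a xs))"

lemma rc_cong: "rc n c F \<Longrightarrow> (\<And>a xs. length xs = n \<Longrightarrow> F a xs = G a xs) \<Longrightarrow> rc n c G"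
  unfolding rc_def by auto

lemma rc_Zr: "rc n Zr (\<lambda>a xs. 0)"
  unfolding rc_def by (auto intro: oev_Zr oev_Pj)

lemma rc_Pj: "i < n \<Longrightarrow> rc n (Pj i) (\<lambda>a xs. xs ! i)"
  unfolding rc_def by (auto intro: oev_Zr oev_Pj)

lemma rc_Sc: "rc (Suc n) Sc (\<lambda>a xs. Suc (hd xs))"
  unfolding rc_def
proof (intro allI impI)
  fix a :: baire and xs :: "nat list" assume "length xs = Suc n"
  then obtain x ys where "xs = x # ys" by (cases xs) auto
  then show "oev a Sc xs (Suc (hd xs))" by (simp add: oev_Sc)
qed

lemma rc_Orc: "rc (Suc n) Orc (\<lambda>a xs. a (hd xs))"
  unfolding rc_def
proof (intro allI impI)
  fix a :: baire and xs :: "nat list" assume "length xs = Suc n"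
  then obtain x ys where "xs = x # ys" by (cases xs) auto
  then show "oev a Orc xs (a (hd xs))" by (simp add: oev_Orc)
qed

lemma rc_Cn: "list_all2 (rc n) gs Gs \<Longrightarrow> rc (length gs) f F \<Longrightarrow>
   rc n (Cn f gs) (\<lambda>a xs. F a (map (\<lambda>G. G a xs) Gs))"
  unfolding rc_def
proof (intro allI impI)
  fix a :: baire and xs :: "nat list" assume l: "list_all2 (\<lambda>g G. \<forall>a xs. length xs = n \<longrightarrow> oev a g xs (G a xs)) gs Gs"
    and f: "\<forall>a xs. length xs = length gs \<longrightarrow> oev a f xs (F a xs)" and n: "length xs = n"
  have lg: "length Gs = length gs" using l by (simp add: list_all2_lengthD)
  show "oev a (Cn f gs) xs (F a (map (\<lambda>G. G a xs) Gs))"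
  proof (rule oev_Cn)
    show "length (map (\<lambda>G. G a xs) Gs) = length gs" using lg by simp
    show "\<forall>i<length gs. oev a (gs ! i) xs (map (\<lambda>G. G a xs) Gs ! i)"
      using list_all2_nthD[OF l] n lg by auto
    show "oev a f (map (\<lambda>G. G a xs) Gs) (F a (map (\<lambda>G. G a xs) Gs))" using f lg by simp
  qed
qed

lemma rc_Pr: "rc n f F \<Longrightarrow> rc (Suc (Suc n)) g G \<Longrightarrow>
  rc (Suc n) (Pr f g) (\<lambda>a xs. rec_nat (F a (tl xs)) (\<lambda>k y. G a (k # y # tl xs)) (hd xs))"
  unfolding rc_def
proof (intro allI impI)
  fix a :: baire and xs :: "nat list" assume f: "\<forall>a xs. length xs = n \<longrightarrow> oev a f xs (F a xs)"
    and g: "\<forall>a xs. length xs = Suc (Suc n) \<longrightarrow> oev a g xs (G a xs)" and l: "length xs = Suc n"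
  then obtain x :: nat and ys where xs: "xs = x # ys" and ly: "length ys = n" by (auto simp: length_Suc_conv)
  have "oev a (Pr f g) (x # ys) (rec_nat (F a ys) (\<lambda>k y. G a (k # y # ys)) x)"
  proof (induction x)
    case 0 show ?case using f ly by (simp add: oev_Pr0)
  next
    case (Suc x) show ?case using g ly by (simp add: oev_PrS[OF Suc])
  qed
  then show "oev a (Pr f g) xs (rec_nat (F a (tl xs)) (\<lambda>k y. G a (k # y # tl xs)) (hd xs))"
    using xs by simp
qed

lemma oev_Mn_Least: "(\<And>m. oev a f (m # xs) (F m)) \<Longrightarrow> F n = 0 \<Longrightarrow> oev a (Mn f) xs (LEAST m. F m = 0)"
proof (rule oev_Mn)
  assume h: "\<And>m. oev a f (m # xs) (F m)" and z: "F n = 0"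
  have "F (LEAST m. F m = 0) = 0" using z by (rule LeastI)
  then show "oev a f ((LEAST m. F m = 0) # xs) 0" using h by metis
  show "\<forall>m<(LEAST m. F m = 0). \<exists>y. y \<noteq> 0 \<and> oev a f (m # xs) y"
    using h not_less_Least by blast
qed

lemma rc_Mn: "rc (Suc n) f F \<Longrightarrow> (\<And>a xs. length xs = n \<Longrightarrow> \<exists>m. F a (m # xs) = 0) \<Longrightarrow>
  rc n (Mn f) (\<lambda>a xs. LEAST m. F a (m # xs) = 0)"
  unfolding rc_def
proof (intro allI impI)
  fix a :: baire and xs :: "nat list"
  assume f: "\<forall>a xs. length xs = Suc n \<longrightarrow> oev a f xs (F a xs)"
    and e: "\<And>a xs. length xs = n \<Longrightarrow> \<exists>m. F a (m # xs) = 0" and l: "length xs = n"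
  obtain m where "F a (m # xs) = 0" using e l by blast
  moreover have "\<And>m. oev a f (m # xs) (F a (m # xs))" using f l by simp
  ultimately show "oev a (Mn f) xs (LEAST m. F a (m # xs) = 0)"
    using oev_Mn_Least[of a f xs "\<lambda>m. F a (m # xs)"] by blast
qed

lemma len1E: "length xs = Suc 0 \<Longrightarrow> (\<And>x. xs = [x] \<Longrightarrow> P) \<Longrightarrow> P"
  by (cases xs) auto
lemma len2E: "length xs = 2 \<Longrightarrow> (\<And>x y. xs = [x, y] \<Longrightarrow> P) \<Longrightarrow> P"
  by (cases xs; cases "tl xs") (auto simp: numeral_2_eq_2)
lemma len3E: "length xs = 3 \<Longrightarrow> (\<And>x y z. xs = [x, y, z] \<Longrightarrow> P) \<Longrightarrow> P"
  by (cases xs; cases "tl xs"; cases "tl (tl xs)") (auto simp: numeral_3_eq_3)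

lemma rc_cong2: "rc n c F \<Longrightarrow> n = m \<Longrightarrow> (\<And>a xs. length xs = m \<Longrightarrow> F a xs = G a xs) \<Longrightarrow> rc m c G"
  unfolding rc_def by auto

lemma rc_Sc1: "rc 1 Sc (\<lambda>a xs. Suc (xs ! 0))"
  using rc_Sc[of 0] by (rule rc_cong2) (auto elim!: len1E)

lemma rc_Orc1: "rc 1 Orc (\<lambda>a xs. a (xs ! 0))"
  using rc_Orc[of 0] by (rule rc_cong2) (auto elim!: len1E)

lemma rc_C1: "rc 1 f F \<Longrightarrow> rc n g G \<Longrightarrow> rc n (Cn f [g]) (\<lambda>a xs. F a [G a xs])"
  using rc_Cn[of n "[g]" "[G]" f F] by simp

lemma rc_C2: "rc 2 f F \<Longrightarrow> rc n g G \<Longrightarrow> rc n h H \<Longrightarrow> rc n (Cn f [g, h]) (\<lambda>a xs. F a [G a xs, H a xs])"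
  using rc_Cn[of n "[g, h]" "[G, H]" f F] by (simp add: numeral_2_eq_2)

lemma rc_C3: "rc 3 f F \<Longrightarrow> rc n g G \<Longrightarrow> rc n h H \<Longrightarrow> rc n k K \<Longrightarrow>
   rc n (Cn f [g, h, k]) (\<lambda>a xs. F a [G a xs, H a xs, K a xs])"
  using rc_Cn[of n "[g, h, k]" "[G, H, K]" f F] by (simp add: numeral_3_eq_3)

lemma rc_Pr': "rc n f F \<Longrightarrow> rc m g G \<Longrightarrow> m = Suc (Suc n) \<Longrightarrow>
  rc (Suc n) (Pr f g) (\<lambda>a xs. rec_nat (F a (tl xs)) (\<lambda>k y. G a (k # y # tl xs)) (hd xs))"
  using rc_Pr by blast

fun cnst :: "nat \<Rightarrow> recf" where
  "cnst 0 = Zr" | "cnst (Suc k) = Cn Sc [cnst k]"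

lemma rc_cnst: "rc n (cnst k) (\<lambda>a xs. k)"
  by (induction k) (auto intro: rc_Zr dest: rc_C1[OF rc_Sc1])

definition ADD where "ADD = Pr (Pj 0) (Cn Sc [Pj 1])"
lemma rc_ADD: "rc 2 ADD (\<lambda>a xs. xs ! 0 + xs ! 1)"
proof -
  have g: "rc 3 (Cn Sc [Pj 1]) (\<lambda>a xs. Suc (xs ! 1))"
    using rc_C1[OF rc_Sc1 rc_Pj[of 1 3]] by simp
  have *: "rec_nat y (\<lambda>k r. Suc r) x = x + y" for x y :: nat by (induction x) auto
  show ?thesis unfolding ADD_def
    by (rule rc_cong2[OF rc_Pr'[OF rc_Pj[of 0 1] g]]) (auto elim!: len2E simp: *)
qed

definition MUL where "MUL = Pr Zr (Cn ADD [Pj 1, Pj 2])"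
lemma rc_MUL: "rc 2 MUL (\<lambda>a xs. xs ! 0 * xs ! 1)"
proof -
  have g: "rc 3 (Cn ADD [Pj 1, Pj 2]) (\<lambda>a xs. xs ! 1 + xs ! 2)"
    using rc_C2[OF rc_ADD rc_Pj[of 1 3] rc_Pj[of 2 3]] by simp
  have *: "rec_nat 0 (\<lambda>k r. r + y) x = x * y" for x y :: nat by (induction x) auto
  show ?thesis unfolding MUL_def
    by (rule rc_cong2[OF rc_Pr'[OF rc_Zr[of 1] g]]) (auto elim!: len2E simp: *)
qed

definition PRED where "PRED = Pr Zr (Pj 0)"
lemma rc_PRED: "rc 1 PRED (\<lambda>a xs. xs ! 0 - 1)"
proof -
  have *: "rec_nat 0 (\<lambda>k r. k) x = x - 1" for x :: nat by (cases x) auto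
  show ?thesis unfolding PRED_def
    by (rule rc_cong2[OF rc_Pr'[OF rc_Zr[of 0] rc_Pj[of 0 2]]]) (auto elim!: len1E simp: *)
qed

definition SUBR where "SUBR = Pr (Pj 0) (Cn PRED [Pj 1])"
definition MONUS where "MONUS = Cn SUBR [Pj 1, Pj 0]"
lemma rc_MONUS: "rc 2 MONUS (\<lambda>a xs. xs ! 0 - xs ! 1)"
proof -
  have g: "rc 3 (Cn PRED [Pj 1]) (\<lambda>a xs. xs ! 1 - 1)"
    using rc_C1[OF rc_PRED rc_Pj[of 1 3]] by simp
  have *: "rec_nat x (\<lambda>k r. r - Suc 0) y = x - y" for x y :: nat by (induction y) auto
  have s: "rc 2 SUBR (\<lambda>a xs. xs ! 1 - xs ! 0)" unfolding SUBR_def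
    by (rule rc_cong2[OF rc_Pr'[OF rc_Pj[of 0 1] g]]) (auto elim!: len2E simp: *)
  show ?thesis unfolding MONUS_def
    using rc_C2[OF s rc_Pj[of 1 2] rc_Pj[of 0 2]] by simp
qed

definition SG where "SG = Pr Zr (cnst 1)"
lemma rc_SG: "rc 1 SG (\<lambda>a xs. if xs ! 0 = 0 then 0 else 1)"
proof -
  have *: "rec_nat 0 (\<lambda>k r. Suc 0) x = (if x = 0 then 0 else 1::nat)" for x :: nat by (cases x) auto
  show ?thesis unfolding SG_def
    by (rule rc_cong2[OF rc_Pr'[OF rc_Zr[of 0] rc_cnst[of 2 1]]]) (auto elim!: len1E simp: *)
qed

definition NSG where "NSG = Pr (cnst 1) Zr"
lemma rc_NSG: "rc 1 NSG (\<lambda>a xs. if xs ! 0 = 0 then 1 else 0)"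
proof -
  have *: "rec_nat (Suc 0) (\<lambda>k r. 0) x = (if x = 0 then 1 else 0::nat)" for x :: nat by (cases x) auto
  show ?thesis unfolding NSG_def
    by (rule rc_cong2[OF rc_Pr'[OF rc_cnst[of 0 1] rc_Zr[of 2]]]) (auto elim!: len1E simp: *)
qed

definition TRI where "TRI = Pr Zr (Cn ADD [Pj 1, Cn Sc [Pj 0]])"
lemma rc_TRI: "rc 1 TRI (\<lambda>a xs. triangle (xs ! 0))"
proof -
  have g: "rc 2 (Cn ADD [Pj 1, Cn Sc [Pj 0]]) (\<lambda>a xs. xs ! 1 + Suc (xs ! 0))"
    using rc_C2[OF rc_ADD rc_Pj[of 1 2] rc_C1[OF rc_Sc1 rc_Pj[of 0 2]]] by simp
  have *: "rec_nat 0 (\<lambda>k y. Suc (y + k)) x = triangle x" for x :: nat by (induction x) auto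
  show ?thesis unfolding TRI_def
    by (rule rc_cong2[OF rc_Pr'[OF rc_Zr[of 0] g]]) (auto elim!: len1E simp: *)
qed

definition PE where "PE = Cn ADD [Cn TRI [Cn ADD [Pj 0, Pj 1]], Pj 0]"
lemma rc_PE: "rc 2 PE (\<lambda>a xs. prod_encode (xs ! 0, xs ! 1))"
  unfolding PE_def
  using rc_C2[OF rc_ADD rc_C1[OF rc_TRI rc_C2[OF rc_ADD rc_Pj[of 0 2] rc_Pj[of 1 2]]] rc_Pj[of 0 2]]
  by (simp add: prod_encode_def)

definition PAR where "PAR = Pr Zr (Cn NSG [Pj 1])"
lemma rc_PAR: "rc 1 PAR (\<lambda>a xs. xs ! 0 mod 2)"
proof -
  have g: "rc 2 (Cn NSG [Pj 1]) (\<lambda>a xs. if xs ! 1 = 0 then 1 else 0)"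
    using rc_C1[OF rc_NSG rc_Pj[of 1 2]] by simp
  have *: "rec_nat 0 (\<lambda>k y. if y = 0 then 1 else 0) x = x mod 2" for x :: nat
    by (induction x) (auto simp: mod_Suc)
  show ?thesis unfolding PAR_def
    by (rule rc_cong2[OF rc_Pr'[OF rc_Zr[of 0] g]]) (auto elim!: len1E simp: *)
qed

definition HALF where "HALF = Pr Zr (Cn ADD [Pj 1, Cn PAR [Pj 0]])"
lemma rc_HALF: "rc 1 HALF (\<lambda>a xs. xs ! 0 div 2)"
proof -
  have g: "rc 2 (Cn ADD [Pj 1, Cn PAR [Pj 0]]) (\<lambda>a xs. xs ! 1 + xs ! 0 mod 2)"
    using rc_C2[OF rc_ADD rc_Pj[of 1 2] rc_C1[OF rc_PAR rc_Pj[of 0 2]]] by simp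
  have *: "rec_nat 0 (\<lambda>k r. r + k mod 2) x = x div 2" for x :: nat
    by (induction x) (auto simp: div_Suc mod_Suc)
  show ?thesis unfolding HALF_def
    by (rule rc_cong2[OF rc_Pr'[OF rc_Zr[of 0] g]]) (auto elim!: len1E simp: *)
qed

definition LE where "LE = Cn NSG [Cn MONUS [Pj 0, Pj 1]]"
lemma rc_LE: "rc 2 LE (\<lambda>a xs. if xs ! 0 \<le> xs ! 1 then 1 else 0)"
  unfolding LE_def using rc_C1[OF rc_NSG rc_C2[OF rc_MONUS rc_Pj[of 0 2] rc_Pj[of 1 2]]] by simp

definition DT where "DT = Cn LE [Cn TRI [Cn Sc [Pj 0]], Pj 1]"
definition DS where "DS = Mn DT"

lemma rc_DS: "rc 1 DS (\<lambda>a xs. LEAST s. xs ! 0 < triangle (Suc s))"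
proof -
  have "rc 2 DT (\<lambda>a xs. if triangle (Suc (xs ! 0)) \<le> xs ! 1 then 1 else 0)"
    unfolding DT_def using rc_C2[OF rc_LE rc_C1[OF rc_TRI rc_C1[OF rc_Sc1 rc_Pj[of 0 2]]] rc_Pj[of 1 2]]
    by simp
  then have t: "rc (Suc 1) DT (\<lambda>a xs. if triangle (Suc (xs ! 0)) \<le> xs ! 1 then 1 else 0)"
    unfolding Suc_1 .
  have ex: "\<exists>m. (if triangle (Suc ((m # xs) ! 0)) \<le> (m # xs) ! 1 then 1 else 0::nat) = 0"
    if "length xs = 1" for xs :: "nat list"
  proof -
    have "xs ! 0 < triangle (Suc (xs ! 0))" by (induction "xs ! 0") auto
    then show ?thesis by (intro exI[of _ "xs ! 0"]) simp
  qed
  show ?thesis unfolding DS_def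
    by (rule rc_cong2[OF rc_Mn[OF t ex]]) (auto simp: not_le)
qed

lemma triangle_mono: "a \<le> b \<Longrightarrow> triangle a \<le> triangle b"
  by (induction b) (auto simp: le_Suc_eq)

lemma prod_decode_least:
  "prod_decode m = (m - triangle (LEAST s. m < triangle (Suc s)),
                    (LEAST s. m < triangle (Suc s)) - (m - triangle (LEAST s. m < triangle (Suc s))))"
proof -
  define s where "s = (LEAST s. m < triangle (Suc s))"
  have e: "\<exists>s. m < triangle (Suc s)"
  proof
    show "m < triangle (Suc m)" by (induction m) auto
  qed
  have s1: "m < triangle (Suc s)" unfolding s_def using e by (rule LeastI_ex)
  have s2: "triangle s \<le> m"
  proof (cases s)
    case 0 then show ?thesis by simp
  next
    case (Suc s')
    then have "s' < s" by simp
    then have "\<not> m < triangle (Suc s')" unfolding s_def by (rule not_less_Least)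
    then show ?thesis using Suc by simp
  qed
  define i where "i = m - triangle s"
  have m: "m = triangle s + i" using s2 i_def by simp
  have "i \<le> s" using s1 m by simp
  then have "prod_decode m = (i, s - i)"
    unfolding m prod_decode_triangle_add by (subst prod_decode_aux.simps) simp
  then show ?thesis unfolding s_def[symmetric] i_def by simp
qed

definition DFST where "DFST = Cn MONUS [Pj 0, Cn TRI [DS]]"
lemma rc_DFST: "rc 1 DFST (\<lambda>a xs. fst (prod_decode (xs ! 0)))"
  unfolding DFST_def using rc_C2[OF rc_MONUS rc_Pj[of 0 1] rc_C1[OF rc_TRI rc_DS]]
  by (simp add: prod_decode_least[of "_ ! 0"])

definition DSND where "DSND = Cn MONUS [DS, DFST]"
lemma rc_DSND: "rc 1 DSND (\<lambda>a xs. snd (prod_decode (xs ! 0)))"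
  unfolding DSND_def using rc_C2[OF rc_MONUS rc_DS rc_DFST]
  by (simp add: prod_decode_least[of "_ ! 0"])

definition ltl :: "nat \<Rightarrow> nat" where "ltl c = snd (prod_decode (c - 1))"

lemma prod_decode_0: "prod_decode 0 = (0, 0)"
proof -
  have "prod_encode (0, 0) = 0" by (simp add: prod_encode_def)
  then show ?thesis by (metis prod_encode_inverse)
qed

lemma ltl_enc: "ltl (list_encode l) = list_encode (tl l)"
  by (cases l) (auto simp: ltl_def prod_decode_0)

lemma ltl_pow_enc: "(ltl ^^ i) (list_encode l) = list_encode (drop i l)"
  by (induction i) (auto simp: ltl_enc drop_Suc tl_drop)

definition LTL where "LTL = Cn DSND [PRED]"
lemma rc_LTL: "rc 1 LTL (\<lambda>a xs. ltl (xs ! 0))"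
  unfolding LTL_def ltl_def using rc_C1[OF rc_DSND rc_PRED] by simp

definition IT where "IT = Pr (Pj 0) (Cn LTL [Pj 1])"
lemma rc_IT: "rc 2 IT (\<lambda>a xs. (ltl ^^ (xs ! 0)) (xs ! 1))"
proof -
  have g: "rc 3 (Cn LTL [Pj 1]) (\<lambda>a xs. ltl (xs ! 1))"
    using rc_C1[OF rc_LTL rc_Pj[of 1 3]] by simp
  have *: "rec_nat c (\<lambda>k. ltl) i = (ltl ^^ i) c" for i c by (induction i) auto
  show ?thesis unfolding IT_def
    by (rule rc_cong2[OF rc_Pr'[OF rc_Pj[of 0 1] g]]) (auto elim!: len2E simp: *)
qed

definition NTH where "NTH = Cn DFST [Cn PRED [IT]]"
lemma rc_NTH: "rc 2 NTH (\<lambda>a xs. fst (prod_decode ((ltl ^^ (xs ! 0)) (xs ! 1) - 1)))"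
  unfolding NTH_def using rc_C1[OF rc_DFST rc_C1[OF rc_PRED rc_IT]] by simp

definition INR where "INR = Cn SG [IT]"
lemma rc_INR: "rc 2 INR (\<lambda>a xs. if (ltl ^^ (xs ! 0)) (xs ! 1) = 0 then 0 else 1)"
  unfolding INR_def using rc_C1[OF rc_SG rc_IT] by simp

lemma nth_code: "i < length l \<Longrightarrow> fst (prod_decode ((ltl ^^ i) (list_encode l) - 1)) = l ! i"
  by (simp add: ltl_pow_enc Cons_nth_drop_Suc[symmetric])

lemma inr_code: "((ltl ^^ i) (list_encode l) = 0) \<longleftrightarrow> \<not> i < length l"
proof -
  have "list_encode (drop i l) = 0 \<longleftrightarrow> drop i l = []"
    by (cases "drop i l") auto
  then show ?thesis by (auto simp: ltl_pow_enc)
qed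

definition enc :: "nat option \<Rightarrow> nat" where "enc v = (case v of None \<Rightarrow> 0 | Some y \<Rightarrow> Suc y)"

definition Ow :: "baire \<Rightarrow> nat \<Rightarrow> nat \<Rightarrow> nat option" where
  "Ow a w x = (if even x then Some (a (x div 2))
     else if x div 2 < length (list_decode w) then Some (list_decode w ! (x div 2)) else None)"

definition ORC where
  "ORC = Cn ADD [Cn MUL [Cn NSG [Cn PAR [Pj 1]], Cn Sc [Cn Orc [Cn HALF [Pj 1]]]],
                 Cn MUL [Cn PAR [Pj 1], Cn MUL [Cn INR [Cn HALF [Pj 1], Pj 0],
                                             Cn Sc [Cn NTH [Cn HALF [Pj 1], Pj 0]]]]]"

lemma rc_ORC: "rc 2 ORC (\<lambda>a xs. enc (Ow a (xs ! 0) (xs ! 1)))"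
proof -
  have x: "rc 2 (Pj 1) (\<lambda>a xs. xs ! 1)" and w: "rc 2 (Pj 0) (\<lambda>a xs. xs ! 0)" by (auto intro: rc_Pj)
  have h: "rc 2 (Cn HALF [Pj 1]) (\<lambda>a xs. xs ! 1 div 2)" using rc_C1[OF rc_HALF x] by simp
  have p: "rc 2 (Cn PAR [Pj 1]) (\<lambda>a xs. xs ! 1 mod 2)" using rc_C1[OF rc_PAR x] by simp
  note t1 = rc_C2[OF rc_MUL rc_C1[OF rc_NSG p] rc_C1[OF rc_Sc1 rc_C1[OF rc_Orc1 h]]]
  note t2 = rc_C2[OF rc_MUL p rc_C2[OF rc_MUL rc_C2[OF rc_INR h w] rc_C1[OF rc_Sc1 rc_C2[OF rc_NTH h w]]]]
  have main: "rc 2 ORC (\<lambda>a xs. (if xs ! 1 mod 2 = 0 then 1 else 0) * Suc (a (xs ! 1 div 2)) +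
      xs ! 1 mod 2 * ((if (ltl ^^ (xs ! 1 div 2)) (xs ! 0) = 0 then 0 else 1) *
         Suc (fst (prod_decode ((ltl ^^ (xs ! 1 div 2)) (xs ! 0) - 1)))))"
    unfolding ORC_def using rc_C2[OF rc_ADD t1 t2] by simp
  show ?thesis
  proof (rule rc_cong[OF main])
    fix a :: baire and xs :: "nat list"
    define w x l where "w = xs ! 0" and "x = xs ! 1" and "l = list_decode w"
    have wl: "w = list_encode l" unfolding l_def by simp
    show "(if xs ! 1 mod 2 = 0 then 1 else 0) * Suc (a (xs ! 1 div 2)) +
      xs ! 1 mod 2 * ((if (ltl ^^ (xs ! 1 div 2)) (xs ! 0) = 0 then 0 else 1) *
         Suc (fst (prod_decode ((ltl ^^ (xs ! 1 div 2)) (xs ! 0) - 1)))) = enc (Ow a (xs ! 0) (xs ! 1))"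
      unfolding w_def[symmetric] x_def[symmetric] Ow_def l_def[symmetric] enc_def
      unfolding wl inr_code
      by (cases "even x") (auto simp: nth_code[simplified])
  qed
qed

fun msrch :: "(nat \<Rightarrow> nat option) \<Rightarrow> nat \<Rightarrow> nat" where
  "msrch v 0 = 0"
| "msrch v (Suc j) = (if msrch v j \<noteq> 0 then msrch v j
     else (case v j of None \<Rightarrow> 1 | Some y \<Rightarrow> if y = 0 then j + 2 else 0))"

fun cev :: "nat \<Rightarrow> (nat \<Rightarrow> nat option) \<Rightarrow> recf \<Rightarrow> nat list \<Rightarrow> nat option" where
  "cev t orc Zr xs = Some 0"
| "cev t orc Sc xs = (case xs of [] \<Rightarrow> None | x # _ \<Rightarrow> Some (Suc x))"
| "cev t orc (Pj i) xs = (if i < length xs then Some (xs ! i) else None)"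
| "cev t orc Orc xs = (case xs of [] \<Rightarrow> None | x # _ \<Rightarrow> orc x)"
| "cev t orc (Cn f gs) xs = (let ys = map (\<lambda>g. cev t orc g xs) gs in
      if None \<in> set ys then None else cev t orc f (map the ys))"
| "cev t orc (Pr f g) xs = (case xs of [] \<Rightarrow> None | n # ys \<Rightarrow>
      rec_nat (cev t orc f ys) (\<lambda>k r. case r of None \<Rightarrow> None | Some y \<Rightarrow> cev t orc g (k # y # ys)) n)"
| "cev t orc (Mn f) xs = (let s = msrch (\<lambda>m. cev t orc f (m # xs)) t in
      if 2 \<le> s then Some (s - 2) else None)"

fun andall :: "recf list \<Rightarrow> recf" where
  "andall [] = cnst 1" | "andall (g # gs) = Cn MUL [Cn SG [g], andall gs]"

lemma rc_andall: "list_all2 (rc n) gs Gs \<Longrightarrow>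
  rc n (andall gs) (\<lambda>a xs. if (\<forall>G\<in>set Gs. G a xs \<noteq> 0) then 1 else 0)"
proof (induction gs arbitrary: Gs)
  case Nil
  have "rc n (cnst 1) (\<lambda>a xs. 1)" by (rule rc_cnst)
  then show ?case using Nil by (simp del: cnst.simps)
next
  case (Cons g gs)
  then obtain G Gs' where Gs: "Gs = G # Gs'" and g: "rc n g G" and r: "list_all2 (rc n) gs Gs'"
    by (cases Gs) auto
  show ?case unfolding Gs andall.simps
    using rc_C2[OF rc_MUL rc_C1[OF rc_SG g] Cons.IH[OF r]] by (rule rc_cong) auto
qed

definition ST where
  "ST h = Cn ADD [Cn NSG [h], Cn MUL [Cn MUL [Cn NSG [Cn PRED [h]], Cn SG [h]], Cn Sc [Cn Sc [Pj 0]]]]"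
definition MG where
  "MG h = Cn ADD [Cn MUL [Cn SG [Pj 1], Pj 1], Cn MUL [Cn NSG [Pj 1], ST h]]"

definition mgf :: "nat \<Rightarrow> nat \<Rightarrow> nat \<Rightarrow> nat" where
  "mgf j acc hv = (if acc \<noteq> 0 then acc else if hv = 0 then 1 else if hv = 1 then j + 2 else 0)"

lemma rc_MG: "rc k h H \<Longrightarrow> 2 \<le> k \<Longrightarrow> rc k (MG h) (\<lambda>a xs. mgf (xs ! 0) (xs ! 1) (H a xs))"
proof -
  assume h: "rc k h H" and k: "2 \<le> k"
  have p0: "rc k (Pj 0) (\<lambda>a xs. xs ! 0)" and p1: "rc k (Pj 1) (\<lambda>a xs. xs ! 1)"
    using k by (auto intro: rc_Pj)
  note s = rc_C2[OF rc_ADD rc_C1[OF rc_NSG h]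
      rc_C2[OF rc_MUL rc_C2[OF rc_MUL rc_C1[OF rc_NSG rc_C1[OF rc_PRED h]] rc_C1[OF rc_SG h]]
         rc_C1[OF rc_Sc1 rc_C1[OF rc_Sc1 p0]]]]
  note m = rc_C2[OF rc_ADD rc_C2[OF rc_MUL rc_C1[OF rc_SG p1] p1] rc_C2[OF rc_MUL rc_C1[OF rc_NSG p1] s]]
  show ?thesis unfolding MG_def ST_def
    by (rule rc_cong[OF m]) (auto simp: mgf_def)
qed

fun PP :: "nat \<Rightarrow> recf \<Rightarrow> recf" where
  "PP n Zr = cnst 1"
| "PP n Sc = (if n = 0 then Zr else Cn Sc [Cn Sc [Pj 2]])"
| "PP n (Pj i) = (if i < n then Cn Sc [Pj (i + 2)] else Zr)"
| "PP n Orc = (if n = 0 then Zr else Cn ORC [Pj 1, Pj 2])"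
| "PP n (Cn f gs) = Cn MUL [andall (map (PP n) gs),
       Cn (PP (length gs) f) (Pj 0 # Pj 1 # map (\<lambda>g. Cn PRED [PP n g]) gs)]"
| "PP n (Pr f g) = (case n of 0 \<Rightarrow> Zr | Suc m \<Rightarrow>
     Cn (Pr (PP m f) (Cn MUL [Cn SG [Pj 1],
          Cn (PP (Suc (Suc m)) g) (Pj 2 # Pj 3 # Pj 0 # Cn PRED [Pj 1] # map Pj [4..<m + 4])]))
       (map Pj (2 # 0 # 1 # [3..<m + 3])))"
| "PP n (Mn f) = Cn MONUS [Cn (Pr Zr (MG (Cn (PP (Suc n) f) (map Pj (2 # 3 # 0 # [4..<n + 4])))))
       (map Pj (0 # [0..<n + 2])), cnst 1]"

definition PV :: "recf \<Rightarrow> baire \<Rightarrow> nat list \<Rightarrow> nat" where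
  "PV c a xs = enc (cev (xs ! 0) (Ow a (xs ! 1)) c (drop 2 xs))"

lemma map_nth_upt: "length xs = m + k \<Longrightarrow> map ((!) xs) [k..<m + k] = drop k xs"
  by (rule nth_equalityI) auto

lemma rc_Cn_idx: "rc (length is) f F \<Longrightarrow> (\<forall>i\<in>set is. i < n) \<Longrightarrow>
   rc n (Cn f (map Pj is)) (\<lambda>a xs. F a (map ((!) xs) is))"
proof -
  assume f: "rc (length is) f F" and i: "\<forall>i\<in>set is. i < n"
  have "list_all2 (rc n) (map Pj is) (map (\<lambda>i a xs. xs ! i) is)"
    using i by (auto simp: list_all2_map1 list_all2_map2 intro!: list.rel_refl_strong rc_Pj)
  from rc_Cn[OF this] f show ?thesis by (simp add: comp_def)
qed

lemma drop2E: "length xs = Suc (Suc n) \<Longrightarrow> (\<And>t w ys. xs = t # w # ys \<Longrightarrow> length ys = n \<Longrightarrow> Q) \<Longrightarrow> Q"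
  by (cases xs; cases "tl xs") auto

lemma msrch_rec: "rec_nat 0 (\<lambda>j acc. mgf j acc (enc (v j))) t = msrch v t"
  by (induction t) (auto simp: mgf_def enc_def split: option.splits)

lemma PV_tw: "PV c a (t # w # ys) = enc (cev t (Ow a w) c ys)"
  by (simp add: PV_def)

lemma PV_Cn: "(if \<forall>G\<in>set (map PV gs). G a xs \<noteq> 0 then 1 else 0) *
    PV f a (xs ! 0 # xs ! 1 # map (\<lambda>g. PV g a xs - 1) gs) = PV (Cn f gs) a xs"
proof (cases "\<forall>g\<in>set gs. cev (xs ! 0) (Ow a (xs ! 1)) g (drop 2 xs) \<noteq> None")
  case True
  then have 1: "\<forall>G\<in>set (map PV gs). G a xs \<noteq> 0" by (auto simp: PV_def enc_def split: option.split)
  have eqm: "map (\<lambda>g. PV g a xs - 1) gs = map the (map (\<lambda>g. cev (xs ! 0) (Ow a (xs ! 1)) g (drop 2 xs)) gs)"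
    using True by (auto simp: PV_def enc_def split: option.split)
  have 3: "None \<notin> set (map (\<lambda>g. cev (xs ! 0) (Ow a (xs ! 1)) g (drop 2 xs)) gs)"
    using True by auto
  show ?thesis unfolding eqm using 1 3 by (simp add: PV_def Let_def)
next
  case False
  then obtain g where g: "g \<in> set gs" "cev (xs ! 0) (Ow a (xs ! 1)) g (drop 2 xs) = None" by auto
  then have "PV g a xs = 0" by (simp add: PV_def enc_def)
  moreover have "None \<in> set (map (\<lambda>g. cev (xs ! 0) (Ow a (xs ! 1)) g (drop 2 xs)) gs)"
    using g by force
  ultimately show ?thesis using g by (auto simp: PV_def enc_def Let_def)
qed

lemma pr_rec: "rec_nat (enc A) (\<lambda>k y. (if y = 0 then 0 else 1) * enc (B k (y - 1))) x =
   enc (rec_nat A (\<lambda>k r. case r of None \<Rightarrow> None | Some y \<Rightarrow> B k y) x)"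
  by (induction x) (auto simp: enc_def split: option.split)

lemma PP_correct: "rc (Suc (Suc n)) (PP n c) (PV c)"
proof (induction c arbitrary: n)
  case Zr
  show ?case unfolding PP.simps
    by (rule rc_cong[OF rc_cnst[of _ 1]]) (simp add: PV_def enc_def)
next
  case Sc
  show ?case
  proof (cases n)
    case 0
    then show ?thesis by simp (rule rc_cong[OF rc_Zr], auto simp: PV_def enc_def elim!: drop2E)
  next
    case (Suc m)
    have "rc (Suc (Suc n)) (Cn Sc [Cn Sc [Pj 2]]) (\<lambda>a xs. Suc (Suc (xs ! 2)))"
      using rc_C1[OF rc_Sc1 rc_C1[OF rc_Sc1 rc_Pj[of 2 "Suc (Suc n)"]]] Suc by simp
    then show ?thesis using Suc
      by simp (rule rc_cong, assumption, auto simp: PV_def enc_def elim!: drop2E split: list.split)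
  qed
next
  case (Pj i)
  show ?case
  proof (cases "i < n")
    case True
    have "rc (Suc (Suc n)) (Cn Sc [Pj (i + 2)]) (\<lambda>a xs. Suc (xs ! (i + 2)))"
      using rc_C1[OF rc_Sc1 rc_Pj[of "i + 2" "Suc (Suc n)"]] True by simp
    then show ?thesis using True
      by simp (rule rc_cong, assumption, auto simp: PV_def enc_def elim!: drop2E)
  next
    case False
    then show ?thesis by simp (rule rc_cong[OF rc_Zr], auto simp: PV_def enc_def elim!: drop2E)
  qed
next
  case Orc
  show ?case
  proof (cases n)
    case 0
    then show ?thesis by simp (rule rc_cong[OF rc_Zr], auto simp: PV_def enc_def elim!: drop2E)
  next
    case (Suc m)
    have "rc (Suc (Suc n)) (Cn ORC [Pj 1, Pj 2]) (\<lambda>a xs. enc (Ow a (xs ! 1) (xs ! 2)))"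
      using rc_C2[OF rc_ORC rc_Pj[of 1 "Suc (Suc n)"] rc_Pj[of 2 "Suc (Suc n)"]] Suc by simp
    then show ?thesis using Suc
      by simp (rule rc_cong, assumption, auto simp: PV_def enc_def elim!: drop2E split: list.split)
  qed
next
  case (Cn f gs)
  have IHf: "rc (Suc (Suc (length gs))) (PP (length gs) f) (PV f)" by (rule Cn.IH(1))
  have IHg: "\<And>g. g \<in> set gs \<Longrightarrow> rc (Suc (Suc n)) (PP n g) (PV g)" by (rule Cn.IH(2))
  have L1: "list_all2 (rc (Suc (Suc n))) (map (PP n) gs) (map PV gs)"
    using IHg by (auto simp: list_all2_map1 list_all2_map2 intro!: list.rel_refl_strong)
  have IHg': "\<And>g. g \<in> set gs \<Longrightarrow> rc (Suc (Suc n)) (Cn PRED [PP n g]) (\<lambda>a xs. PV g a xs - 1)"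
    using rc_C1[OF rc_PRED IHg] by simp
  have L2: "list_all2 (rc (Suc (Suc n))) (Pj 0 # Pj 1 # map (\<lambda>g. Cn PRED [PP n g]) gs)
        ((\<lambda>a xs. xs ! 0) # (\<lambda>a xs. xs ! 1) # map (\<lambda>g a xs. PV g a xs - 1) gs)"
    using IHg' by (auto simp: list_all2_map1 list_all2_map2 intro!: list.rel_refl_strong rc_Pj)
  have len: "length (Pj 0 # Pj 1 # map (\<lambda>g. Cn PRED [PP n g]) gs) = Suc (Suc (length gs))" by simp
  have B: "rc (Suc (Suc n)) (Cn (PP (length gs) f) (Pj 0 # Pj 1 # map (\<lambda>g. Cn PRED [PP n g]) gs))
      (\<lambda>a xs. PV f a (xs ! 0 # xs ! 1 # map (\<lambda>g. PV g a xs - 1) gs))"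
    using rc_Cn[OF L2 IHf[folded len]] by (simp add: comp_def)
  note A = rc_andall[OF L1]
  show ?case unfolding PP.simps
    apply (rule rc_cong[OF rc_C2[OF rc_MUL A B]])
    subgoal for a xs using PV_Cn[of gs a xs f] by simp
    done
next
  case (Pr f g)
  show ?case
  proof (cases n)
    case 0
    then show ?thesis by simp (rule rc_cong[OF rc_Zr], auto simp: PV_def enc_def elim!: drop2E)
  next
    case (Suc m)
    have IHf: "rc (Suc (Suc m)) (PP m f) (PV f)" by (rule Pr.IH(1))
    have IHg: "rc (Suc (Suc (Suc (Suc m)))) (PP (Suc (Suc m)) g) (PV g)" by (rule Pr.IH(2))
    define k where "k = Suc (Suc (Suc (Suc m)))"
    have L: "list_all2 (rc k) (Pj 2 # Pj 3 # Pj 0 # Cn PRED [Pj 1] # map Pj [4..<m + 4])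
      ((\<lambda>a xs. xs ! 2) # (\<lambda>a xs. xs ! 3) # (\<lambda>a xs. xs ! 0) # (\<lambda>a xs. xs ! 1 - 1) #
         map (\<lambda>i a xs. xs ! i) [4..<m + 4])"
    proof -
      have "rc k (Cn PRED [Pj 1]) (\<lambda>a xs. xs ! 1 - 1)"
        using rc_C1[OF rc_PRED rc_Pj[of 1 k]] k_def by simp
      then show ?thesis unfolding k_def
        by (auto simp: list_all2_map1 list_all2_map2 intro!: list.rel_refl_strong rc_Pj)
    qed
    have len: "length (Pj 2 # Pj 3 # Pj 0 # Cn PRED [Pj 1] # map Pj [4..<m + 4]) = Suc (Suc (Suc (Suc m)))"
      by simp
    have G1: "rc k (Cn (PP (Suc (Suc m)) g) (Pj 2 # Pj 3 # Pj 0 # Cn PRED [Pj 1] # map Pj [4..<m + 4]))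
       (\<lambda>a xs. PV g a (xs ! 2 # xs ! 3 # xs ! 0 # (xs ! 1 - 1) # drop 4 xs))"
    proof (rule rc_cong[OF rc_Cn[OF L IHg[folded len]]])
      fix a :: baire and xs :: "nat list" assume "length xs = k"
      then have "map ((!) xs) [4..<m + 4] = drop 4 xs" by (intro map_nth_upt) (simp add: k_def)
      then show "PV g a (map (\<lambda>G. G a xs) ((\<lambda>a xs. xs ! 2) # (\<lambda>a xs. xs ! 3) # (\<lambda>a xs. xs ! 0) #
         (\<lambda>a xs. xs ! 1 - 1) # map (\<lambda>i a xs. xs ! i) [4..<m + 4])) =
         PV g a (xs ! 2 # xs ! 3 # xs ! 0 # (xs ! 1 - 1) # drop 4 xs)"
        by (simp add: comp_def)
    qed
    have G: "rc k (Cn MUL [Cn SG [Pj 1], Cn (PP (Suc (Suc m)) g) (Pj 2 # Pj 3 # Pj 0 # Cn PRED [Pj 1] # map Pj [4..<m + 4])])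
       (\<lambda>a xs. (if xs ! 1 = 0 then 0 else 1) * PV g a (xs ! 2 # xs ! 3 # xs ! 0 # (xs ! 1 - 1) # drop 4 xs))"
      using rc_C2[OF rc_MUL rc_C1[OF rc_SG rc_Pj[of 1 k]] G1] k_def by simp
    note R = rc_Pr'[OF IHf G k_def]
    have len2: "length (2 # 0 # 1 # [3..<m + 3]) = Suc (Suc (Suc m))" by simp
    note R2 = rc_Cn_idx[OF R[folded len2], of "Suc (Suc (Suc m))"]
    show ?thesis unfolding PP.simps Suc nat.case
    proof (rule rc_cong[OF R2])
      show "\<forall>i\<in>set (2 # 0 # 1 # [3..<m + 3]). i < Suc (Suc (Suc m))" by auto
    next
      fix a :: baire and xs :: "nat list" assume l: "length xs = Suc (Suc (Suc m))"
      then obtain t w x ys where xs: "xs = t # w # x # ys" and ly: "length ys = m"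
        by (metis drop2E length_Suc_conv)
      have "map ((!) xs) [3..<m + 3] = ys" using map_nth_upt[of xs m 3] l xs by simp
      then have mp: "map ((!) xs) (2 # 0 # 1 # [3..<m + 3]) = x # t # w # ys" using xs by simp
      show "rec_nat (PV f a (tl (map ((!) xs) (2 # 0 # 1 # [3..<m + 3]))))
          (\<lambda>k y. (if (k # y # tl (map ((!) xs) (2 # 0 # 1 # [3..<m + 3]))) ! 1 = 0 then 0 else 1) *
            PV g a ((k # y # tl (map ((!) xs) (2 # 0 # 1 # [3..<m + 3]))) ! 2 #
                    (k # y # tl (map ((!) xs) (2 # 0 # 1 # [3..<m + 3]))) ! 3 #
                    (k # y # tl (map ((!) xs) (2 # 0 # 1 # [3..<m + 3]))) ! 0 #
                    ((k # y # tl (map ((!) xs) (2 # 0 # 1 # [3..<m + 3]))) ! 1 - 1) #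
                    drop 4 (k # y # tl (map ((!) xs) (2 # 0 # 1 # [3..<m + 3])))))
          (hd (map ((!) xs) (2 # 0 # 1 # [3..<m + 3]))) = PV (Pr f g) a xs"
        unfolding mp using pr_rec[of "cev t (Ow a w) f ys" "\<lambda>k y. cev t (Ow a w) g (k # y # ys)" x] by (simp add: PV_tw xs)
    qed
  qed
next
  case (Mn f)
  have IHf: "rc (Suc (Suc (Suc n))) (PP (Suc n) f) (PV f)" by (rule Mn.IH)
  have len: "length (2 # 3 # 0 # [4..<n + 4]) = Suc (Suc (Suc n))" by simp
  have H: "rc (Suc (Suc (Suc (Suc n)))) (Cn (PP (Suc n) f) (map Pj (2 # 3 # 0 # [4..<n + 4])))
     (\<lambda>a xs. PV f a (xs ! 2 # xs ! 3 # xs ! 0 # drop 4 xs))"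
  proof (rule rc_cong[OF rc_Cn_idx[OF IHf[folded len]]])
    show "\<forall>i\<in>set (2 # 3 # 0 # [4..<n + 4]). i < Suc (Suc (Suc (Suc n)))" by auto
    fix a :: baire and xs :: "nat list" assume "length xs = Suc (Suc (Suc (Suc n)))"
    then have "map ((!) xs) [4..<n + 4] = drop 4 xs" by (intro map_nth_upt) simp
    then show "PV f a (map ((!) xs) (2 # 3 # 0 # [4..<n + 4])) = PV f a (xs ! 2 # xs ! 3 # xs ! 0 # drop 4 xs)"
      by simp
  qed
  have M: "rc (Suc (Suc (Suc (Suc n)))) (MG (Cn (PP (Suc n) f) (map Pj (2 # 3 # 0 # [4..<n + 4]))))
     (\<lambda>a xs. mgf (xs ! 0) (xs ! 1) (PV f a (xs ! 2 # xs ! 3 # xs ! 0 # drop 4 xs)))"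
    by (rule rc_MG[OF H]) simp
  note R = rc_Pr'[OF rc_Zr[of "Suc (Suc n)"] M refl]
  have len2: "length (0 # [0..<n + 2]) = Suc (Suc (Suc n))" by simp
  note R2 = rc_Cn_idx[OF R[folded len2], of "Suc (Suc n)"]
  have R3: "rc (Suc (Suc n)) (Cn (Pr Zr (MG (Cn (PP (Suc n) f) (map Pj (2 # 3 # 0 # [4..<n + 4])))))
       (map Pj (0 # [0..<n + 2])))
     (\<lambda>a xs. rec_nat 0 (\<lambda>k y. mgf k y (PV f a (xs ! 0 # xs ! 1 # k # drop 2 xs))) (xs ! 0))"
  proof (rule rc_cong[OF R2])
    show "\<forall>i\<in>set (0 # [0..<n + 2]). i < Suc (Suc n)" by auto
    fix a :: baire and xs :: "nat list" assume l: "length xs = Suc (Suc n)"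
    then have "map ((!) xs) [0..<n + 2] = xs" using map_nth_upt[of xs "n+2" 0] by simp
    then have mp: "map ((!) xs) (0 # [0..<n + 2]) = xs ! 0 # xs" by simp
    from l obtain t w ys where xs: "xs = t # w # ys" by (metis drop2E)
    show "rec_nat 0 (\<lambda>k y. mgf ((k # y # tl (map ((!) xs) (0 # [0..<n + 2]))) ! 0)
           ((k # y # tl (map ((!) xs) (0 # [0..<n + 2]))) ! 1)
           (PV f a ((k # y # tl (map ((!) xs) (0 # [0..<n + 2]))) ! 2 #
                    (k # y # tl (map ((!) xs) (0 # [0..<n + 2]))) ! 3 #
                    (k # y # tl (map ((!) xs) (0 # [0..<n + 2]))) ! 0 #
                    drop 4 (k # y # tl (map ((!) xs) (0 # [0..<n + 2]))))))
        (hd (map ((!) xs) (0 # [0..<n + 2]))) =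
       rec_nat 0 (\<lambda>k y. mgf k y (PV f a (xs ! 0 # xs ! 1 # k # drop 2 xs))) (xs ! 0)"
      unfolding mp by (simp add: xs)
  qed
  show ?case unfolding PP.simps
  proof (rule rc_cong[OF rc_C2[OF rc_MONUS R3 rc_cnst[of _ 1]]])
    fix a :: baire and xs :: "nat list" assume l: "length xs = Suc (Suc n)"
    from l obtain t w ys where xs: "xs = t # w # ys" by (metis drop2E)
    have "rec_nat 0 (\<lambda>k y. mgf k y (PV f a (xs ! 0 # xs ! 1 # k # drop 2 xs))) (xs ! 0) =
        msrch (\<lambda>m. cev t (Ow a w) f (m # ys)) t"
      unfolding xs by (simp add: PV_tw msrch_rec)
    then show "[rec_nat 0 (\<lambda>k y. mgf k y (PV f a (xs ! 0 # xs ! 1 # k # drop 2 xs))) (xs ! 0), 1] ! 0 -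
         [rec_nat 0 (\<lambda>k y. mgf k y (PV f a (xs ! 0 # xs ! 1 # k # drop 2 xs))) (xs ! 0), 1] ! 1 =
         PV (Mn f) a xs"
      by (simp add: xs PV_tw enc_def Let_def) linarith
  qed
qed

lemma msrch_0: "msrch v t = 0 \<longleftrightarrow> (\<forall>m<t. \<exists>y. v m = Some (Suc y))"
proof (induction t)
  case 0 then show ?case by simp
next
  case (Suc t)
  show ?case
  proof (cases "msrch v t = 0")
    case True
    have e: "msrch v (Suc t) = 0 \<longleftrightarrow> (\<exists>y. v t = Some (Suc y))"
    proof (cases "v t")
      case None then show ?thesis using True by simp
    next
      case (Some z) then show ?thesis using True by (cases z) auto
    qed
    have "(\<forall>m<Suc t. \<exists>y. v m = Some (Suc y)) \<longleftrightarrow> (\<forall>m<t. \<exists>y. v m = Some (Suc y)) \<and> (\<exists>y. v t = Some (Suc y))"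
      by (auto simp: less_Suc_eq)
    then show ?thesis using e True Suc.IH by simp
  next
    case False
    then have "msrch v (Suc t) \<noteq> 0" by simp
    moreover have "\<not> (\<forall>m<Suc t. \<exists>y. v m = Some (Suc y))" using False Suc.IH by auto
    ultimately show ?thesis by simp
  qed
qed

lemma msrch_SS: "msrch v t = Suc (Suc m) \<Longrightarrow> m < t \<and> v m = Some 0 \<and> (\<forall>m'<m. \<exists>y. v m' = Some (Suc y))"
proof (induction t)
  case 0 then show ?case by simp
next
  case (Suc t)
  show ?case
  proof (cases "msrch v t = 0")
    case True
    then have all: "\<forall>m<t. \<exists>y. v m = Some (Suc y)" using msrch_0 by blast
    from Suc.prems True have "(case v t of None \<Rightarrow> 1 | Some y \<Rightarrow> if y = 0 then t + 2 else 0) = Suc (Suc m)"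
      by simp
    then have "v t = Some 0 \<and> m = t"
      by (cases "v t") (auto split: if_splits)
    then show ?thesis using all by auto
  next
    case False
    then have "msrch v t = Suc (Suc m)" using Suc.prems by simp
    then show ?thesis using Suc.IH by auto
  qed
qed

lemma msrch_SS_intro: "m < t \<Longrightarrow> v m = Some 0 \<Longrightarrow> (\<forall>m'<m. \<exists>y. v m' = Some (Suc y)) \<Longrightarrow> msrch v t = Suc (Suc m)"
proof (induction t)
  case 0 then show ?case by simp
next
  case (Suc t)
  show ?case
  proof (cases "m < t")
    case True
    then show ?thesis using Suc by simp
  next
    case False
    then have m: "m = t" using Suc.prems by simp
    then have "msrch v t = 0" using Suc.prems msrch_0 by blast
    then show ?thesis using m Suc.prems by simp
  qed
qed

definition subo :: "(nat \<Rightarrow> nat option) \<Rightarrow> (nat \<Rightarrow> nat option) \<Rightarrow> bool" where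
  "subo o1 o2 \<longleftrightarrow> (\<forall>x y. o1 x = Some y \<longrightarrow> o2 x = Some y)"

lemma cev_sound: "cev t orc c xs = Some y \<Longrightarrow> subo orc (\<lambda>x. Some (a x)) \<Longrightarrow> oev a c xs y"
proof (induction c arbitrary: xs y)
  case Zr then show ?case by (auto intro: oev_Zr)
next
  case Sc then show ?case by (auto intro: oev_Sc split: list.splits)
next
  case (Pj i) then show ?case by (auto intro: oev_Pj split: if_splits)
next
  case Orc then show ?case by (auto intro: oev_Orc simp: subo_def split: list.splits)
next
  case (Cn f gs)
  let ?ys = "map (\<lambda>g. cev t orc g xs) gs"
  have nn: "None \<notin> set ?ys" and fz: "cev t orc f (map the ?ys) = Some y"
    using Cn.prems(1) by (auto simp: Let_def split: if_splits)
  show ?case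
  proof (rule oev_Cn)
    show "length (map the ?ys) = length gs" by simp
    show "\<forall>i<length gs. oev a (gs ! i) xs (map the ?ys ! i)"
    proof (intro allI impI)
      fix i assume i: "i < length gs"
      then have "cev t orc (gs ! i) xs \<noteq> None" using nn by (metis length_map nth_map nth_mem)
      then have "cev t orc (gs ! i) xs = Some (map the ?ys ! i)" using i by auto
      then show "oev a (gs ! i) xs (map the ?ys ! i)" using Cn.IH(2)[OF nth_mem[OF i]] Cn.prems(2) by blast
    qed
    show "oev a f (map the ?ys) y" using Cn.IH(1)[OF fz Cn.prems(2)] .
  qed
next
  case (Pr f g)
  then obtain n ys where xs: "xs = n # ys" by (cases xs) auto
  have "rec_nat (cev t orc f ys) (\<lambda>k r. case r of None \<Rightarrow> None | Some y \<Rightarrow> cev t orc g (k # y # ys)) n = Some y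
     \<Longrightarrow> oev a (Pr f g) (n # ys) y" for y
  proof (induction n arbitrary: y)
    case 0 then show ?case using Pr.IH(1) Pr.prems(2) by (auto intro: oev_Pr0)
  next
    case (Suc n)
    then obtain y' where 1: "rec_nat (cev t orc f ys) (\<lambda>k r. case r of None \<Rightarrow> None | Some y \<Rightarrow> cev t orc g (k # y # ys)) n = Some y'"
      and 2: "cev t orc g (n # y' # ys) = Some y" by (auto split: option.splits)
    show ?case using Suc.IH[OF 1] Pr.IH(2)[OF 2 Pr.prems(2)] by (rule oev_PrS)
  qed
  then show ?case using Pr.prems(1) xs by simp
next
  case (Mn f)
  let ?v = "\<lambda>m. cev t orc f (m # xs)"
  from Mn.prems(1) have s: "msrch ?v t = Suc (Suc y)"
    by (auto simp: Let_def split: if_splits)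
  from msrch_SS[OF s] have 1: "?v y = Some 0" and 2: "\<forall>m'<y. \<exists>z. ?v m' = Some (Suc z)" by auto
  show ?case
  proof (rule oev_Mn)
    show "oev a f (y # xs) 0" using Mn.IH[OF 1 Mn.prems(2)] .
    show "\<forall>m<y. \<exists>z. z \<noteq> 0 \<and> oev a f (m # xs) z"
    proof (intro allI impI)
      fix m assume "m < y" then obtain z where "?v m = Some (Suc z)" using 2 by blast
      then show "\<exists>z. z \<noteq> 0 \<and> oev a f (m # xs) z" using Mn.IH Mn.prems(2) by blast
    qed
  qed
qed

lemma cev_mono: "cev t orc c xs = Some y \<Longrightarrow> t \<le> t' \<Longrightarrow> subo orc orc' \<Longrightarrow> cev t' orc' c xs = Some y"
proof (induction c arbitrary: xs y)
  case Zr then show ?case by simp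
next
  case Sc then show ?case by simp
next
  case (Pj i) then show ?case by simp
next
  case Orc then show ?case by (auto simp: subo_def split: list.splits)
next
  case (Cn f gs)
  let ?ys = "map (\<lambda>g. cev t orc g xs) gs"
  let ?ys' = "map (\<lambda>g. cev t' orc' g xs) gs"
  have nn: "None \<notin> set ?ys" and fz: "cev t orc f (map the ?ys) = Some y"
    using Cn.prems(1) by (auto simp: Let_def split: if_splits)
  have eq: "?ys' = ?ys"
  proof (rule map_cong[OF refl])
    fix g assume g: "g \<in> set gs"
    then obtain z where "cev t orc g xs = Some z" using nn by force
    then show "cev t' orc' g xs = cev t orc g xs" using Cn.IH(2)[OF g] Cn.prems by simp
  qed
  show ?case using nn Cn.IH(1)[OF fz Cn.prems(2,3)] by (simp add: eq[unfolded Let_def] Let_def)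
next
  case (Pr f g)
  then obtain n ys where xs: "xs = n # ys" by (cases xs) auto
  have "rec_nat (cev t orc f ys) (\<lambda>k r. case r of None \<Rightarrow> None | Some y \<Rightarrow> cev t orc g (k # y # ys)) n = Some y
     \<Longrightarrow> rec_nat (cev t' orc' f ys) (\<lambda>k r. case r of None \<Rightarrow> None | Some y \<Rightarrow> cev t' orc' g (k # y # ys)) n = Some y" for y
  proof (induction n arbitrary: y)
    case 0 then show ?case using Pr.IH(1) Pr.prems(2,3) by auto
  next
    case (Suc n)
    then obtain y' where 1: "rec_nat (cev t orc f ys) (\<lambda>k r. case r of None \<Rightarrow> None | Some y \<Rightarrow> cev t orc g (k # y # ys)) n = Some y'"
      and 2: "cev t orc g (n # y' # ys) = Some y" by (auto split: option.splits)
    show ?case using Suc.IH[OF 1] Pr.IH(2)[OF 2 Pr.prems(2,3)] by simp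
  qed
  then show ?case using Pr.prems(1) xs by simp
next
  case (Mn f)
  let ?v = "\<lambda>m. cev t orc f (m # xs)"
  let ?v' = "\<lambda>m. cev t' orc' f (m # xs)"
  from Mn.prems(1) have s: "msrch ?v t = Suc (Suc y)"
    by (auto simp: Let_def split: if_splits)
  from msrch_SS[OF s] have 0: "y < t" and 1: "?v y = Some 0" and 2: "\<forall>m'<y. \<exists>z. ?v m' = Some (Suc z)" by auto
  have "msrch ?v' t' = Suc (Suc y)"
  proof (rule msrch_SS_intro)
    show "y < t'" using 0 Mn.prems(2) by simp
    show "?v' y = Some 0" using Mn.IH[OF 1 Mn.prems(2,3)] .
    show "\<forall>m'<y. \<exists>z. ?v' m' = Some (Suc z)" using 2 Mn.IH Mn.prems(2,3) by blast
  qed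
  then show ?case by (simp add: Let_def)
qed

lemma cev_complete:
  fixes orcs :: "nat \<Rightarrow> nat \<Rightarrow> nat option"
  assumes mono: "\<And>k k'. k \<le> k' \<Longrightarrow> subo (orcs k) (orcs k')"
    and cover: "\<And>x. \<exists>k. orcs k x = Some (a x)"
    and ev: "oev a c xs y"
  shows "\<exists>t k. cev t (orcs k) c xs = Some y"
proof -
  have lift: "cev t' (orcs k') c xs = Some y"
    if "cev t (orcs k) c xs = Some y" "t \<le> t'" "k \<le> k'" for t t' k k' c xs y
    using cev_mono[OF that(1,2) mono[OF that(3)]] .
  from ev show ?thesis
  proof (induction rule: oev.induct)
    case (oev_Zr xs) then show ?case by simp
  next
    case (oev_Sc x xs) then show ?case by simp
  next
    case (oev_Pj i xs) then show ?case by simp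
  next
    case (oev_Orc x xs)
    obtain k where "orcs k x = Some (a x)" using cover by blast
    then show ?case by auto
  next
    case (oev_Cn ys gs xs f z)
    have "\<forall>i\<in>{..<length gs}. \<exists>tk. cev (fst tk) (orcs (snd tk)) (gs ! i) xs = Some (ys ! i)"
      using oev_Cn.IH(1) by auto
    then obtain TK where TK: "\<And>i. i < length gs \<Longrightarrow> cev (fst (TK i)) (orcs (snd (TK i))) (gs ! i) xs = Some (ys ! i)"
      by (metis bchoice lessThan_iff)
    obtain tf kf where f: "cev tf (orcs kf) f ys = Some z" using oev_Cn.IH(2) by blast
    define t where "t = tf + (\<Sum>i<length gs. fst (TK i))"
    define k where "k = kf + (\<Sum>i<length gs. snd (TK i))"
    have g: "cev t (orcs k) (gs ! i) xs = Some (ys ! i)" if i: "i < length gs" for i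
    proof (rule lift[OF TK[OF i]])
      have "fst (TK i) \<le> (\<Sum>i<length gs. fst (TK i))" by (rule member_le_sum) (use i in auto)
      then show "fst (TK i) \<le> t" unfolding t_def by simp
      have "snd (TK i) \<le> (\<Sum>i<length gs. snd (TK i))" by (rule member_le_sum) (use i in auto)
      then show "snd (TK i) \<le> k" unfolding k_def by simp
    qed
    have m: "map (\<lambda>g. cev t (orcs k) g xs) gs = map Some ys"
      by (rule nth_equalityI) (use oev_Cn.hyps(1) g in auto)
    have "cev t (orcs k) f ys = Some z" by (rule lift[OF f]) (auto simp: t_def k_def)
    then have "cev t (orcs k) (Cn f gs) xs = Some z" by (simp add: m comp_def)
    then show ?case by blast
  next
    case (oev_Pr0 f xs y g)
    then obtain t k where "cev t (orcs k) f xs = Some y" by blast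
    then show ?case by auto
  next
    case (oev_PrS f g n xs y z)
    obtain t1 k1 where 1: "cev t1 (orcs k1) (Pr f g) (n # xs) = Some y" using oev_PrS.IH(1) by blast
    obtain t2 k2 where 2: "cev t2 (orcs k2) g (n # y # xs) = Some z" using oev_PrS.IH(2) by blast
    have h1: "cev (t1 + t2) (orcs (k1 + k2)) (Pr f g) (n # xs) = Some y" by (rule lift[OF 1]) auto
    have h2: "cev (t1 + t2) (orcs (k1 + k2)) g (n # y # xs) = Some z" by (rule lift[OF 2]) auto
    have "cev (t1 + t2) (orcs (k1 + k2)) (Pr f g) (Suc n # xs) = Some z" using h1 h2 by simp
    then show ?case by blast
  next
    case (oev_Mn f n xs)
    obtain t0 k0 where 0: "cev t0 (orcs k0) f (n # xs) = Some 0" using oev_Mn.IH(1) by blast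
    have "\<forall>m\<in>{..<n}. \<exists>tky. snd (snd tky) \<noteq> 0 \<and> cev (fst tky) (orcs (fst (snd tky))) f (m # xs) = Some (snd (snd tky))"
      using oev_Mn.IH(2) by fastforce
    then obtain TK where TK: "\<And>m. m < n \<Longrightarrow> snd (snd (TK m)) \<noteq> 0 \<and>
        cev (fst (TK m)) (orcs (fst (snd (TK m)))) f (m # xs) = Some (snd (snd (TK m)))"
      by (metis bchoice lessThan_iff)
    define t where "t = t0 + (\<Sum>m<n. fst (TK m)) + Suc n"
    define k where "k = k0 + (\<Sum>m<n. fst (snd (TK m)))"
    let ?v = "\<lambda>m. cev t (orcs k) f (m # xs)"
    have "msrch ?v t = Suc (Suc n)"
    proof (rule msrch_SS_intro)
      show "n < t" unfolding t_def by simp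
      show "?v n = Some 0" by (rule lift[OF 0]) (auto simp: t_def k_def)
      show "\<forall>m'<n. \<exists>y. ?v m' = Some (Suc y)"
      proof (intro allI impI)
        fix m assume mn: "m < n"
        have "?v m = Some (snd (snd (TK m)))"
        proof (rule lift)
          show "cev (fst (TK m)) (orcs (fst (snd (TK m)))) f (m # xs) = Some (snd (snd (TK m)))"
            using TK[OF mn] by blast
          have "fst (TK m) \<le> (\<Sum>m<n. fst (TK m))" by (rule member_le_sum) (use mn in auto)
          then show "fst (TK m) \<le> t" unfolding t_def by simp
          have "fst (snd (TK m)) \<le> (\<Sum>m<n. fst (snd (TK m)))" by (rule member_le_sum) (use mn in auto)
          then show "fst (snd (TK m)) \<le> k" unfolding k_def by simp
        qed
        then show "\<exists>y. ?v m = Some (Suc y)" using TK[OF mn] by (metis not0_implies_Suc)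
      qed
    qed
    then have "cev t (orcs k) (Mn f) xs = Some n" by (simp add: Let_def)
    then show ?case by blast
  qed
qed

lemma rc_oev: "rc n c F \<Longrightarrow> length xs = n \<Longrightarrow> oev a c xs (F a xs)"
  unfolding rc_def by blast

lemma oev_Cn1: "oev a g xs u \<Longrightarrow> oev a f [u] v \<Longrightarrow> oev a (Cn f [g]) xs v"
  by (rule oev_Cn[of "[u]"]) auto

lemma oev_Cn2: "oev a g1 xs u1 \<Longrightarrow> oev a g2 xs u2 \<Longrightarrow> oev a f [u1, u2] v \<Longrightarrow> oev a (Cn f [g1, g2]) xs v"
  by (rule oev_Cn[of "[u1, u2]"]) (auto simp: less_Suc_eq)

fun rel :: "recf \<Rightarrow> recf" where
  "rel Zr = Zr" | "rel Sc = Sc" | "rel (Pj i) = Pj i"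
| "rel Orc = Cn Orc [Cn ADD [Pj 0, Pj 0]]"
| "rel (Cn f gs) = Cn (rel f) (map rel gs)"
| "rel (Pr f g) = Pr (rel f) (rel g)"
| "rel (Mn f) = Mn (rel f)"

definition evenp :: "baire \<Rightarrow> baire" where "evenp s = (\<lambda>i. s (i + i))"
definition oddp :: "baire \<Rightarrow> baire" where "oddp s = (\<lambda>i. s (Suc (i + i)))"

lemma rel_oev: "oev (evenp s) c xs y \<Longrightarrow> oev s (rel c) xs y"
proof (induction rule: oev.induct)
  case (oev_Zr xs) then show ?case by (simp add: oev.oev_Zr)
next
  case (oev_Sc x xs) then show ?case by (simp add: oev.oev_Sc)
next
  case (oev_Pj i xs) then show ?case by (simp add: oev.oev_Pj)
next
  case (oev_Orc x xs)
  have r: "rc (Suc (length xs)) (Cn Orc [Cn ADD [Pj 0, Pj 0]]) (\<lambda>a ys. a (ys ! 0 + ys ! 0))"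
    using rc_C1[OF rc_Orc1 rc_C2[OF rc_ADD rc_Pj[of 0 "Suc (length xs)"] rc_Pj[of 0 "Suc (length xs)"]]]
    by simp
  show ?case using rc_oev[OF r, of "x # xs" s] by (simp add: evenp_def)
next
  case (oev_Cn ys gs xs f z)
  show ?case unfolding rel.simps
  proof (rule oev.oev_Cn[of ys])
    show "length ys = length (map rel gs)" using oev_Cn.hyps(1) by simp
    show "\<forall>i<length (map rel gs). oev s (map rel gs ! i) xs (ys ! i)" using oev_Cn.IH(1) by simp
    show "oev s (rel f) ys z" by (rule oev_Cn.IH(2))
  qed
next
  case (oev_Pr0 f xs y g) then show ?case by (simp add: oev.oev_Pr0)
next
  case (oev_PrS f g n xs y z) then show ?case using oev.oev_PrS by simp
next
  case (oev_Mn f n xs)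
  show ?case unfolding rel.simps
  proof (rule oev.oev_Mn)
    show "oev s (rel f) (n # xs) 0" using oev_Mn.IH(1) .
    show "\<forall>m<n. \<exists>y. y \<noteq> 0 \<and> oev s (rel f) (m # xs) y" using oev_Mn.IH(2) by blast
  qed
qed

definition GS where
  "GS = Cn Sc [Cn PE [Cn Orc [Cn Sc [Cn ADD [Cn PRED [Cn MONUS [Pj 2, Pj 0]], Cn PRED [Cn MONUS [Pj 2, Pj 0]]]]], Pj 1]]"
definition SQ where "SQ = Pr Zr GS"
definition SEQ where "SEQ = Cn SQ [Pj 0, Pj 0]"

lemma sq_rec: "j \<le> kk \<Longrightarrow> rec_nat 0 (\<lambda>j acc. Suc (prod_encode (a (Suc ((kk - j - 1) + (kk - j - 1))), acc))) j
   = list_encode (map (\<lambda>i. a (Suc (i + i))) [kk - j..<kk])"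
proof (induction j)
  case 0 then show ?case by simp
next
  case (Suc j)
  have 1: "[kk - Suc j..<kk] = (kk - Suc j) # [Suc (kk - Suc j)..<kk]"
    by (rule upt_conv_Cons) (use Suc.prems in arith)
  have 2: "Suc (kk - Suc j) = kk - j" using Suc.prems by arith
  have 3: "kk - j - 1 = kk - Suc j" by arith
  have IH: "rec_nat 0 (\<lambda>j acc. Suc (prod_encode (a (Suc ((kk - j - 1) + (kk - j - 1))), acc))) j
     = list_encode (map (\<lambda>i. a (Suc (i + i))) [kk - j..<kk])" using Suc by simp
  show ?case unfolding 1 2 by (simp only: old.nat.rec(2) 3 IH list.map list_encode.simps)
qed

lemma rc_SEQ: "rc 1 SEQ (\<lambda>a xs. seqcode (oddp a) (xs ! 0))"
proof -
  have d: "rc 3 (Cn PRED [Cn MONUS [Pj 2, Pj 0]]) (\<lambda>a xs. xs ! 2 - xs ! 0 - 1)"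
    using rc_C1[OF rc_PRED rc_C2[OF rc_MONUS rc_Pj[of 2 3] rc_Pj[of 0 3]]] by simp
  have g: "rc 3 GS (\<lambda>a xs. Suc (prod_encode (a (Suc ((xs ! 2 - xs ! 0 - 1) + (xs ! 2 - xs ! 0 - 1))), xs ! 1)))"
    unfolding GS_def using rc_C1[OF rc_Sc1 rc_C2[OF rc_PE rc_C1[OF rc_Orc1 rc_C1[OF rc_Sc1 rc_C2[OF rc_ADD d d]]] rc_Pj[of 1 3]]]
    by simp
  have r: "rc (Suc 1) SQ (\<lambda>a xs. rec_nat 0 (\<lambda>k y. Suc (prod_encode (a (Suc ((tl xs ! 0 - k - 1) + (tl xs ! 0 - k - 1))), y))) (hd xs))"
    unfolding SQ_def using rc_Pr'[OF rc_Zr[of 1] g] by simp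
  have s: "rc 2 SQ (\<lambda>a xs. rec_nat 0 (\<lambda>k y. Suc (prod_encode (a (Suc ((xs ! 1 - k - 1) + (xs ! 1 - k - 1))), y))) (xs ! 0))"
    by (rule rc_cong2[OF r]) (auto elim!: len2E)
  show ?thesis unfolding SEQ_def
  proof (rule rc_cong[OF rc_C2[OF s rc_Pj[of 0 1] rc_Pj[of 0 1]]])
    fix a :: baire and xs :: "nat list"
    show "rec_nat 0 (\<lambda>k y. Suc (prod_encode (a (Suc (([xs ! 0, xs ! 0] ! 1 - k - 1) + ([xs ! 0, xs ! 0] ! 1 - k - 1))), y))) ([xs ! 0, xs ! 0] ! 0) =
      seqcode (oddp a) (xs ! 0)"
      using sq_rec[of "xs ! 0" "xs ! 0" a] by (simp add: seqcode_def oddp_def)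
  qed simp_all
qed

definition TEST where "TEST cK = Cn NSG [Cn (rel cK) [Cn PE [Pj 1, Cn SEQ [Pj 0]]]]"
definition F2P where "F2P cK = Cn PRED [Cn (rel cK) [Cn PE [Pj 0, Cn SEQ [Mn (TEST cK)]]]]"

lemma test_oev:
  assumes k: "\<And>m. oev (evenp s) cK [m] (kq m)"
  shows "oev s (TEST cK) [kk, n] (if kq (prod_encode (n, seqcode (oddp s) kk)) = 0 then 1 else 0)"
proof -
  have pe: "oev s (Cn PE [Pj 1, Cn SEQ [Pj 0]]) [kk, n] (prod_encode (n, seqcode (oddp s) kk))"
    using rc_oev[OF rc_C2[OF rc_PE rc_Pj[of 1 2] rc_C1[OF rc_SEQ rc_Pj[of 0 2]]], of "[kk, n]" s] by simp
  have r: "oev s (Cn (rel cK) [Cn PE [Pj 1, Cn SEQ [Pj 0]]]) [kk, n] (kq (prod_encode (n, seqcode (oddp s) kk)))"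
    by (rule oev_Cn1[OF pe rel_oev[OF k]])
  show ?thesis unfolding TEST_def
    by (rule oev_Cn1[OF r]) (use rc_oev[OF rc_NSG, of "[kq (prod_encode (n, seqcode (oddp s) kk))]" s] in simp)
qed

lemma f2p_oev:
  assumes k: "\<And>m. oev (evenp s) cK [m] (kq m)"
    and e: "eta kq (oddp s) = Some q"
  shows "oev s (F2P cK) [n] (q n)"
proof -
  let ?r = "oddp s"
  have ex: "\<forall>n. \<exists>k. 0 < kq (prod_encode (n, seqcode ?r k))"
    and q: "q = (\<lambda>n. kq (prod_encode (n, seqcode ?r (LEAST k. 0 < kq (prod_encode (n, seqcode ?r k))))) - 1)"
    using e unfolding eta_def by (auto split: if_splits)
  obtain k0 where k0: "0 < kq (prod_encode (n, seqcode ?r k0))" using ex by blast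
  define L where "L = (LEAST k. 0 < kq (prod_encode (n, seqcode ?r k)))"
  have eqL: "(LEAST m. (if kq (prod_encode (n, seqcode ?r m)) = 0 then 1 else 0::nat) = 0) = L"
    unfolding L_def by (rule arg_cong[where f = Least]) auto
  have mn: "oev s (Mn (TEST cK)) [n] L"
    using oev_Mn_Least[of s "TEST cK" "[n]" "\<lambda>m. if kq (prod_encode (n, seqcode ?r m)) = 0 then 1 else 0" k0]
      test_oev[OF k] k0 unfolding eqL by simp
  have sq: "oev s (Cn SEQ [Mn (TEST cK)]) [n] (seqcode ?r L)"
    by (rule oev_Cn1[OF mn]) (use rc_oev[OF rc_SEQ, of "[L]" s] in simp)
  have pe: "oev s (Cn PE [Pj 0, Cn SEQ [Mn (TEST cK)]]) [n] (prod_encode (n, seqcode ?r L))"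
    by (rule oev_Cn2[OF _ sq]) (use rc_oev[OF rc_PE, of "[n, seqcode ?r L]" s] oev_Pj[of 0 "[n]" s] in simp_all)
  have r: "oev s (Cn (rel cK) [Cn PE [Pj 0, Cn SEQ [Mn (TEST cK)]]]) [n] (kq (prod_encode (n, seqcode ?r L)))"
    by (rule oev_Cn1[OF pe rel_oev[OF k]])
  have "oev s (F2P cK) [n] (kq (prod_encode (n, seqcode ?r L)) - 1)"
    unfolding F2P_def
    by (rule oev_Cn1[OF r]) (use rc_oev[OF rc_PRED, of "[kq (prod_encode (n, seqcode ?r L))]" s] in simp)
  then show ?thesis unfolding q L_def by simp
qed

lemma evenp_pair: "evenp (pair p r) = p" and oddp_pair: "oddp (pair p r) = r"
  by (auto simp: evenp_def oddp_def pair_def)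

definition KP where "KP c2 = Cn (PP 1 c2) [Cn DSND [Pj 0], Cn DSND [Pj 0], Cn DFST [Pj 0]]"
definition kfun where
  "kfun c2 p m = PV c2 p [snd (prod_decode m), snd (prod_decode m), fst (prod_decode m)]"

lemma rc_KP: "rc 1 (KP c2) (\<lambda>a xs. kfun c2 a (xs ! 0))"
proof -
  have pp: "rc 3 (PP 1 c2) (PV c2)" using PP_correct[of 1 c2] by (simp add: eval_nat_numeral)
  have s: "rc 1 (Cn DSND [Pj 0]) (\<lambda>a xs. snd (prod_decode (xs ! 0)))"
    using rc_C1[OF rc_DSND rc_Pj[of 0 1]] by simp
  have f: "rc 1 (Cn DFST [Pj 0]) (\<lambda>a xs. fst (prod_decode (xs ! 0)))"
    using rc_C1[OF rc_DFST rc_Pj[of 0 1]] by simp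
  show ?thesis unfolding KP_def kfun_def using rc_C3[OF pp s s f] by simp
qed

lemma kfun_pe: "kfun c2 p (prod_encode (n, w)) = enc (cev w (Ow p w) c2 [n])"
  by (simp add: kfun_def PV_tw)

lemma Ow_seq: "Ow p (seqcode r k) x = (if even x then Some (p (x div 2))
    else if x div 2 < k then Some (r (x div 2)) else None)"
  by (simp add: Ow_def seqcode_def)

lemma len_le_list_encode: "length l \<le> list_encode l"
proof (induction l)
  case Nil then show ?case by simp
next
  case (Cons x l)
  have "list_encode l \<le> prod_encode (x, list_encode l)" by (rule le_prod_encode_2)
  then show ?case using Cons by simp
qed

lemma k_le_seqcode: "k \<le> seqcode r k"
  using len_le_list_encode[of "map r [0..<k]"] by (simp add: seqcode_def)

lemma cev_seq_sound: "cev t (Ow p (seqcode r k)) c xs = Some y \<Longrightarrow> oev (pair p r) c xs y"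
  by (rule cev_sound) (auto simp: subo_def Ow_seq pair_def split: if_splits)

lemma cev_seq_complete:
  assumes "oev (pair p r) c xs y"
  shows "\<exists>K0. \<forall>k\<ge>K0. cev (seqcode r k) (Ow p (seqcode r k)) c xs = Some y"
proof -
  have mono: "subo (Ow p (seqcode r k)) (Ow p (seqcode r k'))" if "k \<le> k'" for k k'
    using that by (auto simp: subo_def Ow_seq)
  have cover: "\<exists>k. Ow p (seqcode r k) x = Some (pair p r x)" for x
    by (rule exI[of _ "Suc (x div 2)"]) (simp add: Ow_seq pair_def)
  obtain t k where tk: "cev t (Ow p (seqcode r k)) c xs = Some y"
    using cev_complete[of "\<lambda>k. Ow p (seqcode r k)", OF mono cover assms] by blast
  show ?thesis
  proof (intro exI allI impI)
    fix k' assume k': "max t k \<le> k'"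
    show "cev (seqcode r k') (Ow p (seqcode r k')) c xs = Some y"
    proof (rule cev_mono[OF tk])
      show "t \<le> seqcode r k'" using k' k_le_seqcode[of k' r] by simp
      show "subo (Ow p (seqcode r k)) (Ow p (seqcode r k'))" using k' by (intro mono) simp
    qed
  qed
qed

lemma eta_K:
  assumes q: "\<And>n. oev (pair p r) c2 [n] (q n)"
  shows "eta (kfun c2 p) r = Some q"
proof -
  have pos: "0 < kfun c2 p (prod_encode (n, seqcode r k)) \<Longrightarrow>
      kfun c2 p (prod_encode (n, seqcode r k)) - 1 = q n" for n k
  proof -
    assume "0 < kfun c2 p (prod_encode (n, seqcode r k))"
    then obtain y where y: "cev (seqcode r k) (Ow p (seqcode r k)) c2 [n] = Some y"
      by (auto simp: kfun_pe enc_def split: option.splits)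
    have "y = q n" using oev_det[OF cev_seq_sound[OF y] q] .
    then show ?thesis using y by (simp add: kfun_pe enc_def)
  qed
  have ex: "\<forall>n. \<exists>k. 0 < kfun c2 p (prod_encode (n, seqcode r k))"
  proof
    fix n
    obtain K0 where "\<forall>k\<ge>K0. cev (seqcode r k) (Ow p (seqcode r k)) c2 [n] = Some (q n)"
      using cev_seq_complete[OF q] by blast
    then have "0 < kfun c2 p (prod_encode (n, seqcode r K0))" by (simp add: kfun_pe enc_def)
    then show "\<exists>k. 0 < kfun c2 p (prod_encode (n, seqcode r k))" ..
  qed
  have "(\<lambda>n. kfun c2 p (prod_encode (n, seqcode r (LEAST k. 0 < kfun c2 p (prod_encode (n, seqcode r k))))) - 1) = q"
  proof
    fix n
    from ex obtain k where "0 < kfun c2 p (prod_encode (n, seqcode r k))" by blast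
    then have "0 < kfun c2 p (prod_encode (n, seqcode r (LEAST k. 0 < kfun c2 p (prod_encode (n, seqcode r k)))))"
      by (rule LeastI)
    then show "kfun c2 p (prod_encode (n, seqcode r (LEAST k. 0 < kfun c2 p (prod_encode (n, seqcode r k))))) - 1 = q n"
      by (rule pos)
  qed
  then show ?thesis using ex unfolding eta_def by simp
qed

lemma closed_S:
  assumes h: "\<And>r. r \<in> R \<Longrightarrow> \<exists>q. F2 (pair p r) = Some q \<and> (\<forall>n. oev (pair p r) c2 [n] (q n))"
  shows "closedin (top_of_set R) {r \<in> R. \<not> delta_S (the (F2 (pair p r)))}"
proof -
  define S where "S = {r \<in> R. \<not> delta_S (the (F2 (pair p r)))}"
  have loc: "\<exists>T. openin (top_of_set R) T \<and> r \<in> T \<and> T \<subseteq> R - S" if r: "r \<in> R - S" for r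
  proof -
    have rR: "r \<in> R" using r by simp
    obtain q where F: "F2 (pair p r) = Some q" and ev: "\<forall>n. oev (pair p r) c2 [n] (q n)" using h[OF rR] by blast
    from r F have "delta_S q" by (simp add: S_def)
    then obtain n where qn: "q n \<noteq> 0" unfolding delta_S_def by auto
    obtain K0 where K0: "\<forall>k\<ge>K0. cev (seqcode r k) (Ow p (seqcode r k)) c2 [n] = Some (q n)"
      using cev_seq_complete[of p r c2 "[n]" "q n"] ev by blast
    then have K0': "cev (seqcode r K0) (Ow p (seqcode r K0)) c2 [n] = Some (q n)" by simp
    define U where "U = {f :: baire. \<forall>i\<in>{..<K0}. f ((\<lambda>i. i) i) \<in> {r i}}"
    have oU: "open U" unfolding U_def by (rule product_topology_basis') (auto intro: open_discrete)
    have sub: "R \<inter> U \<subseteq> R - S"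
    proof
      fix r' assume r': "r' \<in> R \<inter> U"
      then have "map r' [0..<K0] = map r [0..<K0]" by (auto simp: U_def intro!: map_cong)
      then have "seqcode r' K0 = seqcode r K0" unfolding seqcode_def by (rule arg_cong)
      then have c: "cev (seqcode r' K0) (Ow p (seqcode r' K0)) c2 [n] = Some (q n)" using K0' by simp
      have o1: "oev (pair p r') c2 [n] (q n)" by (rule cev_seq_sound[OF c])
      have r'R: "r' \<in> R" using r' by simp
      obtain q' where F': "F2 (pair p r') = Some q'" and ev': "\<forall>n. oev (pair p r') c2 [n] (q' n)"
        using h[OF r'R] by blast
      have "q' n = q n" using oev_det[OF ev'[rule_format, of n] o1] .
      then have "delta_S q'" using qn unfolding delta_S_def by metis
      then show "r' \<in> R - S" using r'R F' by (simp add: S_def)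
    qed
    show ?thesis
    proof (intro exI conjI)
      show "openin (top_of_set R) (R \<inter> U)" using oU by (rule openin_open_Int)
      show "r \<in> R \<inter> U" using rR by (simp add: U_def)
      show "R \<inter> U \<subseteq> R - S" by (rule sub)
    qed
  qed
  have "openin (top_of_set R) (R - S)"
  proof (subst openin_subopen, intro ballI)
    fix x assume "x \<in> R - S"
    then show "\<exists>T. openin (top_of_set R) T \<and> x \<in> T \<and> T \<subseteq> R - S" by (rule loc)
  qed
  moreover have "S \<subseteq> R" unfolding S_def by blast
  ultimately show ?thesis unfolding closedin_def S_def[symmetric] topspace_euclidean_subtopology by (rule conjI[rotated])
qed

lemma PC_nonempty: "PC \<mu> R I A \<noteq> {} \<Longrightarrow> PC \<mu> R I A = A \<and> A \<noteq> {} \<and> A \<subseteq> R \<and>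
   closedin (top_of_set R) A \<and> enn2ereal (emeasure \<mu> A) \<in> I"
  unfolding PC_def by (auto split: if_splits)

lemma PC_intro: "A \<noteq> {} \<Longrightarrow> A \<subseteq> R \<Longrightarrow> closedin (top_of_set R) A \<Longrightarrow> enn2ereal (emeasure \<mu> A) \<in> I
   \<Longrightarrow> PC \<mu> R I A = A"
  unfolding PC_def by auto

lemma W_to_LV:
  assumes W: "weihrauch_le \<delta>X \<delta>Y f (delta_closed R) (delta_sub R) (PC \<mu>R R I)"
  shows "las_vegas \<delta>X \<delta>Y f R \<mu>R I"
proof -
  obtain H K where cH: "computable H" and cK: "computable K" and
    real: "\<And>G. realizes (delta_closed R) (delta_sub R) (PC \<mu>R R I) G \<Longrightarrow>
       realizes \<delta>X \<delta>Y f (\<lambda>p. case K p of None \<Rightarrow> None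
                      | Some k \<Rightarrow> (case G k of None \<Rightarrow> None | Some q \<Rightarrow> H (pair p q)))"
    using W unfolding weihrauch_le_def by blast
  obtain ck where ck: "\<And>p q. K p = Some q \<Longrightarrow> \<forall>n. oev p ck [n] (q n)"
    using cK unfolding computable_def by blast
  define F2 where "F2 s = (case K (evenp s) of None \<Rightarrow> None | Some k \<Rightarrow> eta k (oddp s))" for s
  have cF2: "computable F2" unfolding computable_def
  proof (rule exI[of _ "F2P ck"], intro allI impI)
    fix s q n assume "F2 s = Some q"
    then obtain kq where kq: "K (evenp s) = Some kq" and e: "eta kq (oddp s) = Some q"
      unfolding F2_def by (auto split: option.splits)
    show "oev s (F2P ck) [n] (q n)"
      using f2p_oev[OF _ e] ck[OF kq] by blast
  qed
  define G0 where "G0 k = (case delta_closed R k of None \<Rightarrow> None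
      | Some A \<Rightarrow> if PC \<mu>R R I A \<noteq> {} then Some (SOME r. r \<in> PC \<mu>R R I A) else None)" for k
  have Gmod: "realizes (delta_closed R) (delta_sub R) (PC \<mu>R R I) (G0(k := Some r))"
    if kA: "delta_closed R k = Some A" and rA: "r \<in> PC \<mu>R R I A" for k A r
    unfolding realizes_def
  proof (intro allI impI)
    fix k' A' assume h: "delta_closed R k' = Some A' \<and> PC \<mu>R R I A' \<noteq> {}"
    show "\<exists>q y. (G0(k := Some r)) k' = Some q \<and> delta_sub R q = Some y \<and> y \<in> PC \<mu>R R I A'"
    proof (cases "k' = k")
      case True
      then have "A' = A" using h kA by simp
      then have "r \<in> R" using rA PC_nonempty[of \<mu>R R I A] by blast
      then show ?thesis using True rA \<open>A' = A\<close> by (simp add: delta_sub_def)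
    next
      case False
      let ?q = "SOME r. r \<in> PC \<mu>R R I A'"
      have q: "?q \<in> PC \<mu>R R I A'" using h by (metis some_in_eq)
      then have "?q \<in> R" using PC_nonempty[of \<mu>R R I A'] by blast
      then show ?thesis using False h q by (simp add: G0_def delta_sub_def)
    qed
  qed
  have G0r: "realizes (delta_closed R) (delta_sub R) (PC \<mu>R R I) G0"
    unfolding realizes_def
  proof (intro allI impI)
    fix k' A' assume h: "delta_closed R k' = Some A' \<and> PC \<mu>R R I A' \<noteq> {}"
    let ?q = "SOME r. r \<in> PC \<mu>R R I A'"
    have q: "?q \<in> PC \<mu>R R I A'" using h by (metis some_in_eq)
    then have "?q \<in> R" using PC_nonempty[of \<mu>R R I A'] by blast
    then show "\<exists>q y. G0 k' = Some q \<and> delta_sub R q = Some y \<and> y \<in> PC \<mu>R R I A'"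
      using h q by (simp add: G0_def delta_sub_def)
  qed
  have main: "(\<forall>r\<in>R. F2 (pair p r) \<noteq> None) \<and>
      (let S = {r \<in> R. \<not> delta_S (the (F2 (pair p r)))} in S \<noteq> {} \<and> enn2ereal (emeasure \<mu>R S) \<in> I \<and>
        (\<forall>r\<in>S. \<exists>q y. H (pair p r) = Some q \<and> \<delta>Y q = Some y \<and> y \<in> f x))"
    if px: "\<delta>X p = Some x \<and> f x \<noteq> {}" for p x
  proof -
    from real[OF G0r] px obtain q0 y0 where
      c0: "(case K p of None \<Rightarrow> None | Some k \<Rightarrow> (case G0 k of None \<Rightarrow> None | Some q \<Rightarrow> H (pair p q))) = Some q0"
      unfolding realizes_def by blast
    then obtain k where Kp: "K p = Some k" by (auto split: option.splits)
    with c0 obtain q1 where "G0 k = Some q1" by (auto split: option.splits)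
    then obtain A where kA: "delta_closed R k = Some A" and PA: "PC \<mu>R R I A \<noteq> {}"
      unfolding G0_def by (auto split: option.splits if_splits)
    from PC_nonempty[OF PA] have PAA: "PC \<mu>R R I A = A" and Ane: "A \<noteq> {}"
      and meas: "enn2ereal (emeasure \<mu>R A) \<in> I" by auto
    from kA have etaR: "\<forall>r\<in>R. eta k r \<noteq> None" and Adef: "A = {r \<in> R. \<not> delta_S (the (eta k r))}"
      unfolding delta_closed_def by (auto split: if_splits)
    have F2eq: "F2 (pair p r) = eta k r" for r
      by (simp add: F2_def evenp_pair oddp_pair Kp)
    have Seq: "{r \<in> R. \<not> delta_S (the (F2 (pair p r)))} = A" unfolding Adef F2eq ..
    show "(\<forall>r\<in>R. F2 (pair p r) \<noteq> None) \<and>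
      (let S = {r \<in> R. \<not> delta_S (the (F2 (pair p r)))} in S \<noteq> {} \<and> enn2ereal (emeasure \<mu>R S) \<in> I \<and>
        (\<forall>r\<in>S. \<exists>q y. H (pair p r) = Some q \<and> \<delta>Y q = Some y \<and> y \<in> f x))"
      unfolding Seq Let_def
    proof (intro conjI ballI)
      show "\<And>r. r \<in> R \<Longrightarrow> F2 (pair p r) \<noteq> None" using etaR F2eq by simp
      show "A \<noteq> {}" by (rule Ane)
      show "enn2ereal (emeasure \<mu>R A) \<in> I" by (rule meas)
      fix r assume rA: "r \<in> A"
      then have rP: "r \<in> PC \<mu>R R I A" using PAA by simp
      from real[OF Gmod[OF kA rP]] px obtain q y where
        "(case K p of None \<Rightarrow> None | Some k' \<Rightarrow> (case (G0(k := Some r)) k' of None \<Rightarrow> None | Some q \<Rightarrow> H (pair p q))) = Some q"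
        and "\<delta>Y q = Some y" "y \<in> f x"
        unfolding realizes_def by blast
      then show "\<exists>q y. H (pair p r) = Some q \<and> \<delta>Y q = Some y \<and> y \<in> f x" using Kp by auto
    qed
  qed
  show ?thesis unfolding las_vegas_def using cH cF2 main by blast
qed

lemma LV_to_W:
  assumes LV: "las_vegas \<delta>X \<delta>Y f R \<mu>R I"
  shows "weihrauch_le \<delta>X \<delta>Y f (delta_closed R) (delta_sub R) (PC \<mu>R R I)"
proof -
  obtain F1 F2 where c1: "computable F1" and c2: "computable F2" and
    lv: "\<And>p x. \<delta>X p = Some x \<and> f x \<noteq> {} \<Longrightarrow>
           (\<forall>r\<in>R. F2 (pair p r) \<noteq> None) \<and>
           (let S = {r \<in> R. \<not> delta_S (the (F2 (pair p r)))} in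
              S \<noteq> {} \<and> enn2ereal (emeasure \<mu>R S) \<in> I \<and>
              (\<forall>r\<in>S. \<exists>q y. F1 (pair p r) = Some q \<and> \<delta>Y q = Some y \<and> y \<in> f x))"
    using LV unfolding las_vegas_def by blast
  obtain cc where cc: "\<And>s q. F2 s = Some q \<Longrightarrow> \<forall>n. oev s cc [n] (q n)"
    using c2 unfolding computable_def by blast
  define K where "K p = Some (kfun cc p)" for p
  have cK: "computable K" unfolding computable_def
  proof (rule exI[of _ "KP cc"], intro allI impI)
    fix p q n assume "K p = Some q"
    then have q: "q = kfun cc p" by (simp add: K_def)
    show "oev p (KP cc) [n] (q n)" using rc_oev[OF rc_KP, of "[n]" p cc] q by simp
  qed
  show ?thesis unfolding weihrauch_le_def
  proof (intro exI conjI allI impI)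
    show "computable F1" by (rule c1)
    show "computable K" by (rule cK)
    fix G assume G: "realizes (delta_closed R) (delta_sub R) (PC \<mu>R R I) G"
    show "realizes \<delta>X \<delta>Y f (\<lambda>p. case K p of None \<Rightarrow> None
                      | Some k \<Rightarrow> (case G k of None \<Rightarrow> None | Some q \<Rightarrow> F1 (pair p q)))"
      unfolding realizes_def
    proof (intro allI impI)
      fix p x assume px: "\<delta>X p = Some x \<and> f x \<noteq> {}"
      define S where "S = {r \<in> R. \<not> delta_S (the (F2 (pair p r)))}"
      have dom: "\<forall>r\<in>R. F2 (pair p r) \<noteq> None" and Sne: "S \<noteq> {}"
        and meas: "enn2ereal (emeasure \<mu>R S) \<in> I"
        and good: "\<forall>r\<in>S. \<exists>q y. F1 (pair p r) = Some q \<and> \<delta>Y q = Some y \<and> y \<in> f x"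
        using lv[OF px] unfolding S_def Let_def by auto
      have hq: "\<exists>q. F2 (pair p r) = Some q \<and> (\<forall>n. oev (pair p r) cc [n] (q n))" if "r \<in> R" for r
        using dom that cc by blast
      have etaF: "eta (kfun cc p) r = F2 (pair p r)" if "r \<in> R" for r
        using hq[OF that] eta_K by auto
      have dc: "delta_closed R (kfun cc p) = Some S"
        unfolding delta_closed_def S_def using etaF dom by auto
      have cl: "closedin (top_of_set R) S" unfolding S_def by (rule closed_S) (rule hq)
      have PS: "PC \<mu>R R I S = S" by (rule PC_intro[OF Sne _ cl meas]) (auto simp: S_def)
      from G dc Sne PS obtain q y where Gq: "G (kfun cc p) = Some q" and "delta_sub R q = Some y" and "y \<in> S"
        unfolding realizes_def by (metis (no_types, lifting))
      then have qS: "q \<in> S" by (auto simp: delta_sub_def split: if_splits)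
      then obtain q' y' where "F1 (pair p q) = Some q'" "\<delta>Y q' = Some y'" "y' \<in> f x" using good by blast
      then show "\<exists>q y. (case K p of None \<Rightarrow> None
                      | Some k \<Rightarrow> (case G k of None \<Rightarrow> None | Some q \<Rightarrow> F1 (pair p q))) = Some q \<and>
                   \<delta>Y q = Some y \<and> y \<in> f x"
        by (simp add: K_def Gq)
    qed
  qed
qed

theorem theorem3p5:
  fixes X :: "'x set" and \<delta>X :: "baire \<Rightarrow> 'x option"
    and Y :: "'y set" and \<delta>Y :: "baire \<Rightarrow> 'y option"
    and f :: "'x \<Rightarrow> 'y set"
    and R :: "baire set" and \<mu>R :: "baire measure" and I :: "ereal set"
  assumes "represented X \<delta>X" and "represented Y \<delta>Y"
    and "\<forall>x\<in>X. f x \<subseteq> Y"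
    and "sets \<mu>R = sets (restrict_space borel R)"
    and "is_interval_ext I"
  shows "weihrauch_le \<delta>X \<delta>Y f (delta_closed R) (delta_sub R) (PC \<mu>R R I)
         \<longleftrightarrow> las_vegas \<delta>X \<delta>Y f R \<mu>R I"
  using W_to_LV LV_to_W by blast

end
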